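(* Let $\alpha,\beta$ be real constants with $2\alpha+\beta=1$ and $\alpha\le 2/3$, and let $A,B>0$. There exist constants $C_1>0$ and $c>0$ (depending only on $\alpha,\beta,A,B$) such that the following holds. Let $m,n$ be positive integers with $m\le n^2/C_1$ and $n\le m^2/C_1$, and let $P$ be a finite set of points and $L$ a finite set of lines in $\mathbb{R}^2$ with $|P|\le A\,m^{\alpha}n^{\beta}$ and $|I(P,L)|\ge B\,m^{\alpha+\frac23}n^{\beta-\frac13}$. Then $|L|\ge c\,m^{\frac12\alpha+1}n^{\frac12\beta-\frac12}$.
   Context: $I(P,L)$ denotes the set of incidences between $P$ and $L$, i.e. pairs $(p,\ell)\in P\times L$ with $p\in\ell$. *)

theory Defs
  imports Complex_Main
begin

definition is_line :: "(real \<times> real) set \<Rightarrow> bool" where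
  "is_line l \<longleftrightarrow> (\<exists>a b c. (a \<noteq> 0 \<or> b \<noteq> 0) \<and> l = {(x, y). a * x + b * y = c})"

definition incidences :: "(real \<times> real) set \<Rightarrow> (real \<times> real) set set \<Rightarrow> ((real \<times> real) \<times> (real \<times> real) set) set" where
  "incidences P L = {(p, l). p \<in> P \<and> l \<in> L \<and> p \<in> l}"

end

theory Submission
  imports Defs
begin

declare split_paired_All[simp del] split_paired_Ex[simp del]

definition slope :: "real \<times> real \<Rightarrow> real \<times> real \<Rightarrow> real" where
  "slope a b = (snd b - snd a) / (fst b - fst a)"

definition oseg :: "real \<times> real \<Rightarrow> real \<times> real \<Rightarrow> (real \<times> real) set" where
  "oseg a b = {z. fst a < fst z \<and> fst z < fst b \<and> snd z = snd a + slope a b * (fst z - fst a)}"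

definition inWc :: "real \<times> real \<Rightarrow> real \<Rightarrow> real \<Rightarrow> real \<times> real \<Rightarrow> bool" where
  "inWc a s1 s2 z \<longleftrightarrow> fst a < fst z \<and> snd a + s1 * (fst z - fst a) \<le> snd z \<and> snd z \<le> snd a + s2 * (fst z - fst a)"

definition inWo :: "real \<times> real \<Rightarrow> real \<Rightarrow> real \<Rightarrow> real \<times> real \<Rightarrow> bool" where
  "inWo a s1 s2 z \<longleftrightarrow> fst a < fst z \<and> snd a + s1 * (fst z - fst a) < snd z \<and> snd z < snd a + s2 * (fst z - fst a)"

lemma cross1d:
  fixes e1 e2 m1 m2 v u :: real
  assumes "v < u" "e1 > 0" "e2 > 0" "\<not> (e1 + m1*(v-u) > 0 \<and> e2 + m2*(v-u) > 0)"
  shows "\<exists>x. v \<le> x \<and> x < u \<and> e1 + m1*(x-u) \<ge> 0 \<and> e2 + m2*(x-u) \<ge> 0 \<and> (e1 + m1*(x-u) = 0 \<or> e2 + m2*(x-u) = 0)"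
proof -
  have pos: "e + m*(x-u) > 0" if "m \<le> 0" "x \<le> u" "e > 0" for e m x :: real
  proof -
    have "m*(x-u) \<ge> 0" using that by (simp add: mult_nonpos_nonpos)
    then show ?thesis using that by linarith
  qed
  have root: "e + m*((u - e/m) - u) = 0" if "m > 0" for e m :: real
    using that by (simp add: field_simps)
  have ge: "e + m*(x-u) \<ge> 0" if "m > 0" "x \<ge> u - e/m" for e m x :: real
  proof -
    have "m*(x - (u - e/m)) \<ge> 0" using that by simp
    then show ?thesis using that by (simp add: field_simps)
  qed
  have rlt: "u - e/m < u" if "m > 0" "e > 0" for e m :: real using that by simp
  have rge: "v \<le> u - e/m" if "m > 0" "\<not> e + m*(v-u) > 0" for e m :: real
  proof (rule ccontr)
    assume "\<not> v \<le> u - e/m"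
    then have "m*(v - (u - e/m)) > 0" using that by simp
    moreover have "m*(v - (u - e/m)) = e + m*(v-u)" using that by (simp add: field_simps)
    ultimately have "e + m*(v-u) > 0" by simp
    then show False using that by simp
  qed
  show ?thesis
  proof (cases "m1 > 0")
    case m1: True
    show ?thesis
    proof (cases "m2 > 0")
      case m2: True
      define x where "x = max (u - e1/m1) (u - e2/m2)"
      have "v \<le> x"
      proof (cases "e1 + m1*(v-u) > 0")
        case True
        then have "v \<le> u - e2/m2" using assms(4) rge[OF m2] by blast
        then show ?thesis unfolding x_def by linarith
      next
        case False
        then have "v \<le> u - e1/m1" using rge[OF m1] by blast
        then show ?thesis unfolding x_def by linarith
      qed
      moreover have "x < u" unfolding x_def using rlt[OF m1 assms(2)] rlt[OF m2 assms(3)] by simp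
      moreover have "e1 + m1*(x-u) \<ge> 0" by (rule ge[OF m1]) (simp add: x_def)
      moreover have "e2 + m2*(x-u) \<ge> 0" by (rule ge[OF m2]) (simp add: x_def)
      moreover have "e1 + m1*(x-u) = 0 \<or> e2 + m2*(x-u) = 0"
        unfolding x_def max_def using root[OF m1] root[OF m2] by auto
      ultimately show ?thesis by blast
    next
      case m2: False
      define x where "x = u - e1/m1"
      have "\<not> e1 + m1*(v-u) > 0" using assms(4) pos[of m2 v e2] m2 assms(1,3) by auto
      then have "v \<le> x" using rge[OF m1] x_def by blast
      moreover have "x < u" unfolding x_def using rlt[OF m1 assms(2)] by simp
      moreover have "e1 + m1*(x-u) = 0" using root[OF m1] x_def by simp
      moreover have "e2 + m2*(x-u) > 0" using pos[of m2 x e2] m2 assms(3) \<open>x < u\<close> by simp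
      ultimately show ?thesis by (intro exI[of _ x]) auto
    qed
  next
    case m1: False
    have "e1 + m1*(v-u) > 0" using pos[of m1 v e1] m1 assms(1,2) by simp
    then have "\<not> e2 + m2*(v-u) > 0" using assms(4) by blast
    then have m2: "m2 > 0" using pos[of m2 v e2] assms(1,3) by force
    define x where "x = u - e2/m2"
    have "v \<le> x" using rge[OF m2] x_def \<open>\<not> e2 + m2*(v-u) > 0\<close> by blast
    moreover have "x < u" unfolding x_def using rlt[OF m2 assms(3)] by simp
    moreover have "e2 + m2*(x-u) = 0" using root[OF m2] x_def by simp
    moreover have "e1 + m1*(x-u) > 0" using pos[of m1 x e1] m1 assms(2) \<open>x < u\<close> by simp
    ultimately show ?thesis by (intro exI[of _ x]) auto
  qed
qed

lemma step2:
  assumes "fst a < fst c" "fst c < xq" "xq \<le> fst b" "xq \<le> fst d" "xq \<le> fst d'"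
    and lo: "snd c + slope c d * (xq - fst c) < snd a + slope a b * (xq - fst a)"
    and hi: "snd a + slope a b * (xq - fst a) < snd c + slope c d' * (xq - fst c)"
  shows "c \<in> oseg a b \<or> oseg a b \<inter> oseg c d \<noteq> {} \<or> oseg a b \<inter> oseg c d' \<noteq> {}"
proof -
  define A where "A x = snd a + slope a b * (x - fst a)" for x
  define D where "D x = snd c + slope c d * (x - fst c)" for x
  define D' where "D' x = snd c + slope c d' * (x - fst c)" for x
  define e1 where "e1 = A xq - D xq"
  define e2 where "e2 = D' xq - A xq"
  define m1 where "m1 = slope a b - slope c d"
  define m2 where "m2 = slope c d' - slope a b"
  have f1: "A x - D x = e1 + m1 * (x - xq)" for x
    unfolding A_def D_def e1_def m1_def by (simp add: algebra_simps)
  have f2: "D' x - A x = e2 + m2 * (x - xq)" for x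
    unfolding A_def D'_def e2_def m2_def by (simp add: algebra_simps)
  have "e1 > 0" "e2 > 0" using lo hi unfolding e1_def e2_def A_def D_def D'_def by auto
  moreover have "\<not> (e1 + m1*(fst c - xq) > 0 \<and> e2 + m2*(fst c - xq) > 0)"
    using f1[of "fst c"] f2[of "fst c"] unfolding D_def D'_def by auto
  ultimately obtain x where x: "fst c \<le> x" "x < xq" "e1 + m1*(x-xq) \<ge> 0" "e2 + m2*(x-xq) \<ge> 0"
      "e1 + m1*(x-xq) = 0 \<or> e2 + m2*(x-xq) = 0"
    using cross1d[of "fst c" xq e1 e2 m1 m2] assms(2) by blast
  show ?thesis
  proof (cases "x = fst c")
    case True
    then have "A (fst c) = snd c" using x f1[of x] f2[of x] unfolding D_def D'_def by auto
    then have "c \<in> oseg a b" unfolding oseg_def A_def using assms by auto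
    then show ?thesis by blast
  next
    case False
    then have xc: "fst c < x" using x by simp
    have inab: "(x, A x) \<in> oseg a b" unfolding oseg_def A_def using assms x by auto
    show ?thesis
    proof (cases "e1 + m1*(x-xq) = 0")
      case True
      then have "A x = D x" using f1[of x] by simp
      then have "(x, A x) \<in> oseg c d" unfolding oseg_def D_def using assms x xc by auto
      then show ?thesis using inab by blast
    next
      case False
      then have "A x = D' x" using f2[of x] x by simp
      then have "(x, A x) \<in> oseg c d'" unfolding oseg_def D'_def using assms x xc by auto
      then show ?thesis using inab by blast
    qed
  qed
qed

lemma step1:
  fixes a c p :: "real \<times> real" and s1 s2 t1 t2 :: real
  assumes "fst a < fst c" "fst c < fst p"
    and nc: "\<not> inWc a s1 s2 c" and pa: "inWo a s1 s2 p" and pc: "inWo c t1 t2 p"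
  shows "\<exists>xq. fst c < xq \<and> xq < fst p \<and>
     ((snd c + t1*(xq - fst c) < snd a + s1*(xq - fst a) \<and> snd a + s1*(xq - fst a) < snd c + t2*(xq - fst c))
    \<or> (snd c + t1*(xq - fst c) < snd a + s2*(xq - fst a) \<and> snd a + s2*(xq - fst a) < snd c + t2*(xq - fst c)))"
proof -
  define \<sigma> where "\<sigma> = (snd p - snd c) / (fst p - fst c)"
  define M where "M x = snd c + \<sigma> * (x - fst c)" for x
  have Mp: "M (fst p) = snd p" unfolding M_def \<sigma>_def using assms(2) by simp
  define A1 where "A1 x = snd a + s1 * (x - fst a)" for x
  define A2 where "A2 x = snd a + s2 * (x - fst a)" for x
  define e1 where "e1 = M (fst p) - A1 (fst p)"
  define e2 where "e2 = A2 (fst p) - M (fst p)"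
  define m1 where "m1 = \<sigma> - s1"
  define m2 where "m2 = s2 - \<sigma>"
  have f1: "M x - A1 x = e1 + m1 * (x - fst p)" for x
    unfolding A1_def M_def e1_def m1_def by (simp add: algebra_simps)
  have f2: "A2 x - M x = e2 + m2 * (x - fst p)" for x
    unfolding A2_def M_def e2_def m2_def by (simp add: algebra_simps)
  have "e1 > 0" "e2 > 0" using pa Mp unfolding e1_def e2_def A1_def A2_def inWo_def by auto
  moreover have "\<not> (e1 + m1*(fst c - fst p) > 0 \<and> e2 + m2*(fst c - fst p) > 0)"
    using f1[of "fst c"] f2[of "fst c"] nc assms(1) unfolding M_def A1_def A2_def inWc_def by auto
  ultimately obtain x where x: "fst c \<le> x" "x < fst p" "e1 + m1*(x - fst p) \<ge> 0" "e2 + m2*(x - fst p) \<ge> 0"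
      "e1 + m1*(x - fst p) = 0 \<or> e2 + m2*(x - fst p) = 0"
    using cross1d[of "fst c" "fst p" e1 e2 m1 m2] assms(2) by blast
  have xc: "x \<noteq> fst c"
  proof
    assume "x = fst c"
    then have "A1 (fst c) \<le> snd c" "snd c \<le> A2 (fst c)" using x f1[of x] f2[of x] unfolding M_def by auto
    then show False using nc assms(1) unfolding inWc_def A1_def A2_def by auto
  qed
  have st: "t1 < \<sigma>" "\<sigma> < t2"
  proof -
    have d: "fst p - fst c > 0" using assms(2) by simp
    have "t1 * (fst p - fst c) < snd p - snd c" "snd p - snd c < t2 * (fst p - fst c)"
      using pc unfolding inWo_def by auto
    then show "t1 < \<sigma>" "\<sigma> < t2" unfolding \<sigma>_def using d by (simp_all add: field_simps)
  qed
  have xc': "x - fst c > 0" using xc x by simp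
  have D1: "snd c + t1*(x - fst c) < M x"
  proof -
    have "(\<sigma> - t1) * (x - fst c) > 0" using st xc' by simp
    then show ?thesis unfolding M_def by (simp add: algebra_simps)
  qed
  have D2: "M x < snd c + t2*(x - fst c)"
  proof -
    have "(t2 - \<sigma>) * (x - fst c) > 0" using st xc' by simp
    then show ?thesis unfolding M_def by (simp add: algebra_simps)
  qed
  show ?thesis
  proof (cases "e1 + m1*(x - fst p) = 0")
    case True
    then have "M x = A1 x" using f1[of x] by simp
    then show ?thesis using D1 D2 xc' x(2) unfolding A1_def by (intro exI[of _ x]) auto
  next
    case False
    then have "M x = A2 x" using f2[of x] x by simp
    then show ?thesis using D1 D2 xc' x(2) unfolding A2_def by (intro exI[of _ x]) auto
  qed
qed


lemma card_le2:
  assumes "finite F" "\<And>x y z. x \<in> F \<Longrightarrow> y \<in> F \<Longrightarrow> z \<in> F \<Longrightarrow> x = y \<or> x = z \<or> y = z"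
  shows "card F \<le> 2"
proof (cases "F = {}")
  case True then show ?thesis by simp
next
  case False
  then obtain x where x: "x \<in> F" by blast
  show ?thesis
  proof (cases "F - {x} = {}")
    case True
    then have "F = {x}" using x by blast
    then show ?thesis by simp
  next
    case False
    then obtain y where y: "y \<in> F" "y \<noteq> x" by blast
    have "F \<subseteq> {x, y}" using assms(2)[OF x y(1)] y by blast
    then have "card F \<le> card {x,y}" by (rule card_mono[rotated]) simp
    also have "\<dots> \<le> 2" by (simp add: card_insert_if)
    finally show ?thesis .
  qed
qed

lemma three_intervals:
  fixes l1 h1 l2 h2 l3 h3 y :: real
  assumes "l1 < h1" "l2 < h2" "l3 < h3" "l1 \<le> y" "y \<le> h1" "l2 \<le> y" "y \<le> h2" "l3 \<le> y" "y \<le> h3"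
    "h1 \<le> l2 \<or> h2 \<le> l1" "h1 \<le> l3 \<or> h3 \<le> l1" "h2 \<le> l3 \<or> h3 \<le> l2"
  shows False
  using assms(10-12) apply (elim disjE) using assms(1-9) by linarith+

lemma disj_intervals:
  fixes l1 h1 l2 h2 :: real
  assumes "l1 < h1" "l2 < h2" "\<And>z. l1 < z \<Longrightarrow> z < h1 \<Longrightarrow> l2 < z \<Longrightarrow> z < h2 \<Longrightarrow> False"
  shows "h1 \<le> l2 \<or> h2 \<le> l1"
proof (rule ccontr)
  assume "\<not> (h1 \<le> l2 \<or> h2 \<le> l1)"
  then have "max l1 l2 < min h1 h2" using assms(1,2) by (simp add: max_def min_def)
  then show False
    using assms(3)[of "(max l1 l2 + min h1 h2)/2"] by (simp add: max_def min_def split: if_splits)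
qed

locale geo =
  fixes V :: "(real \<times> real) set" and E :: "((real \<times> real) \<times> (real \<times> real)) set"
  assumes finV: "finite V" and injx: "inj_on fst V" and Esub: "E \<subseteq> V \<times> V"
    and Eor: "\<And>a b. (a,b) \<in> E \<Longrightarrow> fst a < fst b"
    and novert: "\<And>a b v. (a,b) \<in> E \<Longrightarrow> v \<in> V \<Longrightarrow> v \<notin> oseg a b"

locale plane = geo +
  assumes nocross: "\<And>a b c d. (a,b) \<in> E \<Longrightarrow> (c,d) \<in> E \<Longrightarrow> (a,b) \<noteq> (c,d) \<Longrightarrow> oseg a b \<inter> oseg c d = {}"

context geo
begin

lemma finE: "finite E" using Esub finV finite_subset by blast

lemma EV: "(a,b) \<in> E \<Longrightarrow> a \<in> V \<and> b \<in> V" using Esub by auto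

lemma slope_eq: "fst a \<noteq> fst b \<Longrightarrow> snd b = snd a + slope a b * (fst b - fst a)"
  unfolding slope_def by (simp add: field_simps)

lemma slope_inj:
  assumes "(a,b) \<in> E" "(a,c) \<in> E" "slope a b = slope a c"
  shows "b = c"
proof (rule ccontr)
  assume ne: "b \<noteq> c"
  have bV: "b \<in> V" and cV: "c \<in> V" using EV assms by auto
  then have fne: "fst b \<noteq> fst c" using injx ne inj_on_def by metis
  have ab: "fst a < fst b" and ac: "fst a < fst c" using Eor assms by auto
  show False
  proof (cases "fst b < fst c")
    case True
    have "b \<in> oseg a c" unfolding oseg_def using True ab slope_eq[of a b] assms(3) by auto
    then show False using novert assms(2) bV by blast
  next
    case False
    then have "fst c < fst b" using fne by simp
    have "c \<in> oseg a b" unfolding oseg_def using \<open>fst c < fst b\<close> ac slope_eq[of a c] assms(3) by auto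
    then show False using novert assms(1) cV by blast
  qed
qed

definition G :: "((real \<times> real) \<times> (real \<times> real) \<times> (real \<times> real)) set" where
  "G = {(a,b,b'). (a,b) \<in> E \<and> (a,b') \<in> E \<and> slope a b < slope a b' \<and>
         (\<forall>c. (a,c) \<in> E \<longrightarrow> \<not> (slope a b < slope a c \<and> slope a c < slope a b'))}"

definition Top where "Top = {e \<in> E. \<forall>c. (fst e,c) \<in> E \<longrightarrow> slope (fst e) c \<le> slope (fst e) (snd e)}"

lemma card_Top: "card Top \<le> card V"
proof -
  have "inj_on fst Top"
  proof (rule inj_onI)
    fix x y assume xy0: "x \<in> Top" "y \<in> Top" "fst x = fst y"
    have x: "(fst x, snd x) \<in> E" "\<And>c. (fst x, c) \<in> E \<Longrightarrow> slope (fst x) c \<le> slope (fst x) (snd x)"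
      using xy0(1) unfolding Top_def by auto
    have y: "(fst y, snd y) \<in> E" "\<And>c. (fst y, c) \<in> E \<Longrightarrow> slope (fst y) c \<le> slope (fst y) (snd y)"
      using xy0(2) unfolding Top_def by auto
    have "slope (fst x) (snd x) = slope (fst x) (snd y)" using x y xy0(3) by (metis order_antisym)
    then have "snd x = snd y" using slope_inj x y xy0(3) by metis
    then show "x = y" using xy0(3) by (simp add: prod_eq_iff)
  qed
  moreover have "fst ` Top \<subseteq> V" unfolding Top_def using Esub by auto
  ultimately show ?thesis using finV by (intro card_inj_on_le) auto
qed

definition succ where
  "succ a b = (SOME c. (a,c) \<in> E \<and> slope a b < slope a c \<and> (\<forall>c'. (a,c') \<in> E \<and> slope a b < slope a c' \<longrightarrow> slope a c \<le> slope a c'))"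

lemma succ_prop:
  assumes "(a,b) \<in> E - Top"
  shows "(a, succ a b) \<in> E \<and> slope a b < slope a (succ a b) \<and> (\<forall>c'. (a,c') \<in> E \<and> slope a b < slope a c' \<longrightarrow> slope a (succ a b) \<le> slope a c')"
proof -
  define S where "S = (\<lambda>c. slope a c) ` {c. (a,c) \<in> E \<and> slope a b < slope a c}"
  have "{c. (a,c) \<in> E \<and> slope a b < slope a c} \<subseteq> snd ` E" by force
  then have fS: "finite S" unfolding S_def using finE finite_subset by blast
  have "S \<noteq> {}" using assms unfolding S_def Top_def by force
  then have "Min S \<in> S" using fS by simp
  then obtain c where c: "(a,c) \<in> E" "slope a b < slope a c" "slope a c = Min S" unfolding S_def by auto
  have "\<forall>c'. (a,c') \<in> E \<and> slope a b < slope a c' \<longrightarrow> slope a c \<le> slope a c'"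
    using c(3) fS unfolding S_def by auto
  then have "\<exists>c. (a,c) \<in> E \<and> slope a b < slope a c \<and> (\<forall>c'. (a,c') \<in> E \<and> slope a b < slope a c' \<longrightarrow> slope a c \<le> slope a c')"
    using c by blast
  then show ?thesis unfolding succ_def by (rule someI_ex)
qed

lemma card_E_le: "card E \<le> card V + card G"
proof -
  have "inj_on (\<lambda>(a,b). (a,b,succ a b)) (E - Top)" by (auto simp: inj_on_def)
  moreover have "(\<lambda>(a,b). (a,b,succ a b)) ` (E - Top) \<subseteq> G"
  proof
    fix g assume "g \<in> (\<lambda>(a,b). (a,b,succ a b)) ` (E - Top)"
    then obtain a b where g: "g = (a,b,succ a b)" "(a,b) \<in> E - Top" by auto
    from succ_prop[OF g(2)] show "g \<in> G" unfolding G_def g(1) using g(2) by force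
  qed
  moreover have "finite G"
  proof -
    have "G \<subseteq> (\<lambda>((a,b),(c,d)). (a,b,d)) ` (E \<times> E)" unfolding G_def by force
    then show ?thesis using finE finite_subset by blast
  qed
  ultimately have "card (E - Top) \<le> card G" by (intro card_inj_on_le) auto
  moreover have "card E = card Top + card (E - Top)"
  proof -
    have "Top \<subseteq> E" unfolding Top_def by auto
    then show ?thesis using finE by (simp add: card_Diff_subset card_mono finite_subset)
  qed
  ultimately show ?thesis using card_Top by linarith
qed

end


lemma lt_cancel: "(\<delta>::real) > 0 \<Longrightarrow> s * \<delta> < t * \<delta> \<Longrightarrow> s < t"
  by (simp add: mult_less_cancel_right)

context geo
begin

definition W where "W a b b' = {v \<in> V. inWc a (slope a b) (slope a b') v}"

definition cl where "cl a b b' = (SOME w. w \<in> W a b b' \<and> (\<forall>u\<in>W a b b'. fst w \<le> fst u))"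

lemma G_D: "(a,b,b') \<in> G \<Longrightarrow> (a,b) \<in> E \<and> (a,b') \<in> E \<and> slope a b < slope a b' \<and>
         (\<forall>c. (a,c) \<in> E \<longrightarrow> \<not> (slope a b < slope a c \<and> slope a c < slope a b'))"
  unfolding G_def by simp

lemma in_W:
  assumes "(a,b,b') \<in> G"
  shows "b \<in> W a b b'" "b' \<in> W a b b'"
proof -
  note g = G_D[OF assms]
  have ab: "fst a < fst b" "fst a < fst b'" using g Eor by auto
  have bV: "b \<in> V" "b' \<in> V" using g EV[of a b] EV[of a b'] by blast+
  have "slope a b * (fst b - fst a) \<le> slope a b' * (fst b - fst a)" using g ab by simp
  then show "b \<in> W a b b'" unfolding W_def inWc_def using ab bV slope_eq[of a b] by simp
  have "slope a b * (fst b' - fst a) \<le> slope a b' * (fst b' - fst a)" using g ab by simp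
  then show "b' \<in> W a b b'" unfolding W_def inWc_def using ab bV slope_eq[of a b'] by simp
qed

lemma cl_prop:
  assumes "(a,b,b') \<in> G"
  shows "cl a b b' \<in> W a b b'" "\<And>u. u \<in> W a b b' \<Longrightarrow> fst (cl a b b') \<le> fst u"
proof -
  have fW: "finite (W a b b')" unfolding W_def using finV by simp
  have ne: "W a b b' \<noteq> {}" using in_W[OF assms] by blast
  have "Min (fst ` W a b b') \<in> fst ` W a b b'" using fW ne by simp
  then obtain w where w: "w \<in> W a b b'" "fst w = Min (fst ` W a b b')" by auto
  have "\<forall>u\<in>W a b b'. fst w \<le> fst u" using w(2) fW by simp
  then have "\<exists>w. w \<in> W a b b' \<and> (\<forall>u\<in>W a b b'. fst w \<le> fst u)" using w(1) by blast
  then have "cl a b b' \<in> W a b b' \<and> (\<forall>u\<in>W a b b'. fst (cl a b b') \<le> fst u)"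
    unfolding cl_def by (rule someI_ex)
  then show "cl a b b' \<in> W a b b'" "\<And>u. u \<in> W a b b' \<Longrightarrow> fst (cl a b b') \<le> fst u" by auto
qed

end

context plane
begin

lemma main_asym:
  assumes g: "(a,b,b') \<in> G" and h: "(c,d,d') \<in> G" and eq: "cl a b b' = cl c d d'"
    and pg: "inWo a (slope a b) (slope a b') p" and ph: "inWo c (slope c d) (slope c d') p"
    and pX: "fst p \<le> fst (cl a b b')" and ac: "fst a < fst c"
  shows False
proof -
  define X where "X = fst (cl a b b')"
  note gD = G_D[OF g] and hD = G_D[OF h]
  have Xb: "X \<le> fst b" "X \<le> fst b'" using cl_prop(2)[OF g] in_W[OF g] unfolding W_def X_def by auto
  have Xd: "X \<le> fst d" "X \<le> fst d'" using cl_prop(2)[OF h] in_W[OF h] eq unfolding W_def X_def by auto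
  have cV: "c \<in> V" using hD EV[of c d] by blast
  have cp: "fst c < fst p" using ph unfolding inWo_def by simp
  have nc: "\<not> inWc a (slope a b) (slope a b') c"
  proof
    assume "inWc a (slope a b) (slope a b') c"
    then have "c \<in> W a b b'" unfolding W_def using cV by simp
    then have "X \<le> fst c" using cl_prop(2)[OF g] X_def by simp
    then show False using cp pX X_def by simp
  qed
  obtain xq where xq: "fst c < xq" "xq < fst p"
    "(snd c + slope c d*(xq - fst c) < snd a + slope a b*(xq - fst a) \<and> snd a + slope a b*(xq - fst a) < snd c + slope c d'*(xq - fst c))
    \<or> (snd c + slope c d*(xq - fst c) < snd a + slope a b'*(xq - fst a) \<and> snd a + slope a b'*(xq - fst a) < snd c + slope c d'*(xq - fst c))"
    using step1[OF ac cp nc pg ph] by blast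
  have ne: "a \<noteq> c" using ac by auto
  have cont: False if b0: "(a,b0) \<in> E" "X \<le> fst b0"
     "snd c + slope c d*(xq - fst c) < snd a + slope a b0*(xq - fst a)"
     "snd a + slope a b0*(xq - fst a) < snd c + slope c d'*(xq - fst c)" for b0
  proof -
    have "c \<in> oseg a b0 \<or> oseg a b0 \<inter> oseg c d \<noteq> {} \<or> oseg a b0 \<inter> oseg c d' \<noteq> {}"
      using step2[OF ac xq(1), of b0 d d'] b0 Xd xq(2) pX X_def by simp
    moreover have "c \<notin> oseg a b0" using novert b0(1) cV by blast
    moreover have "oseg a b0 \<inter> oseg c d = {}" using nocross[OF b0(1)] hD ne by blast
    moreover have "oseg a b0 \<inter> oseg c d' = {}" using nocross[OF b0(1)] hD ne by blast
    ultimately show False by blast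
  qed
  show False using xq(3) cont[of b] cont[of b'] gD Xb by blast
qed

lemma main:
  assumes g: "(a,b,b') \<in> G" and h: "(c,d,d') \<in> G" and eq: "cl a b b' = cl c d d'"
    and pg: "inWo a (slope a b) (slope a b') p" and ph: "inWo c (slope c d) (slope c d') p"
    and pX: "fst p \<le> fst (cl a b b')"
  shows "(a,b,b') = (c,d,d')"
proof -
  note gD = G_D[OF g] and hD = G_D[OF h]
  have aV: "a \<in> V" "c \<in> V" using gD hD EV[of a b] EV[of c d] by blast+
  consider "fst a < fst c" | "fst c < fst a" | "a = c"
    using injx aV by (metis inj_onD linorder_neqE_linordered_idom)
  then show ?thesis
  proof cases
    case 1 then show ?thesis using main_asym[OF g h eq pg ph pX] by simp
  next
    case 2 then show ?thesis using main_asym[OF h g eq[symmetric] ph pg] pX eq by simp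
  next
    case 3
    define \<delta> where "\<delta> = fst p - fst a"
    define \<eta> where "\<eta> = snd p - snd a"
    have dp: "\<delta> > 0" using pg unfolding inWo_def \<delta>_def by simp
    have i1: "slope a b * \<delta> < \<eta>" "\<eta> < slope a b' * \<delta>" using pg unfolding inWo_def \<delta>_def \<eta>_def by auto
    have i2: "slope a d * \<delta> < \<eta>" "\<eta> < slope a d' * \<delta>" using ph 3 unfolding inWo_def \<delta>_def \<eta>_def by auto
    have s1: "slope a d < slope a b'" using lt_cancel[OF dp] i1 i2 by (meson less_trans)
    have s2: "slope a b < slope a d'" using lt_cancel[OF dp] i1 i2 by (meson less_trans)
    have s3: "slope a b < slope a b'" "slope a d < slope a d'" using lt_cancel[OF dp] i1 i2 by (meson less_trans)+
    have "slope a d \<le> slope a b" using gD hD 3 s1 by (meson not_le)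
    moreover have "slope a b \<le> slope a d" using gD hD 3 s2 by (meson not_le)
    ultimately have bd: "b = d" using slope_inj gD hD 3 by (metis order_antisym)
    have "slope a b' \<le> slope a d'" using gD hD 3 s2 by (meson not_le)
    moreover have "slope a d' \<le> slope a b'" using gD hD 3 s1 by (meson not_le)
    ultimately have "b' = d'" using slope_inj gD hD 3 by (metis order_antisym)
    then show ?thesis using bd 3 by simp
  qed
qed

end


context geo
begin

lemma finG: "finite G"
proof -
  have "G \<subseteq> (\<lambda>(e1,e2). (fst e1, snd e1, snd e2)) ` (E \<times> E)"
  proof
    fix g assume "g \<in> G"
    then obtain a b b' where g: "g = (a,b,b')" "(a,b) \<in> E" "(a,b') \<in> E" unfolding G_def by auto
    then show "g \<in> (\<lambda>(e1,e2). (fst e1, snd e1, snd e2)) ` (E \<times> E)"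
      by (intro image_eqI[of _ _ "((a,b),(a,b'))"]) auto
  qed
  then show ?thesis using finE finite_subset by blast
qed

definition clg where "clg g = (case g of (a,b,b') \<Rightarrow> cl a b b')"
definition LO where "LO g = (case g of (a,b,b') \<Rightarrow> snd a + slope a b * (fst (cl a b b') - fst a))"
definition HI where "HI g = (case g of (a,b,b') \<Rightarrow> snd a + slope a b' * (fst (cl a b b') - fst a))"

lemma iv:
  assumes "g \<in> G"
  shows "LO g < HI g" "LO g \<le> snd (clg g)" "snd (clg g) \<le> HI g"
proof -
  obtain a b b' where g: "g = (a,b,b')" by (cases g) auto
  have gG: "(a,b,b') \<in> G" using assms g by simp
  have w: "inWc a (slope a b) (slope a b') (cl a b b')" using cl_prop(1)[OF gG] unfolding W_def by simp
  have "slope a b < slope a b'" using G_D[OF gG] by simp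
  moreover have "fst (cl a b b') - fst a > 0" using w unfolding inWc_def by simp
  ultimately have "slope a b * (fst (cl a b b') - fst a) < slope a b' * (fst (cl a b b') - fst a)" by simp
  then show "LO g < HI g" unfolding LO_def HI_def g by simp
  show "LO g \<le> snd (clg g)" "snd (clg g) \<le> HI g" using w unfolding LO_def HI_def clg_def g inWc_def by simp_all
qed

end

context plane
begin

lemma dj:
  assumes "g \<in> G" "h \<in> G" "clg g = clg h" "g \<noteq> h"
  shows "HI g \<le> LO h \<or> HI h \<le> LO g"
proof (rule disj_intervals[OF iv(1)[OF assms(1)] iv(1)[OF assms(2)]])
  fix z assume z: "LO g < z" "z < HI g" "LO h < z" "z < HI h"
  obtain a b b' where g: "g = (a,b,b')" by (cases g) auto
  obtain c d d' where h: "h = (c,d,d')" by (cases h) auto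
  have gG: "(a,b,b') \<in> G" and hG: "(c,d,d') \<in> G" using assms g h by auto
  have eq: "cl a b b' = cl c d d'" using assms(3) g h unfolding clg_def by simp
  have wa: "fst a < fst (cl a b b')" using cl_prop(1)[OF gG] unfolding W_def inWc_def by simp
  have wc: "fst c < fst (cl c d d')" using cl_prop(1)[OF hG] unfolding W_def inWc_def by simp
  define p where "p = (fst (cl a b b'), z)"
  have pg: "inWo a (slope a b) (slope a b') p" using z wa unfolding inWo_def p_def LO_def HI_def g by simp
  have ph: "inWo c (slope c d) (slope c d') p" using z wc eq unfolding inWo_def p_def LO_def HI_def h by simp
  have "(a,b,b') = (c,d,d')" using main[OF gG hG eq pg ph] p_def by simp
  then show False using assms(4) g h by simp
qed

lemma fiber: "card {g \<in> G. clg g = w} \<le> 2"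
proof (rule card_le2)
  show "finite {g \<in> G. clg g = w}" using finG by simp
next
  fix x y z assume xyz: "x \<in> {g \<in> G. clg g = w}" "y \<in> {g \<in> G. clg g = w}" "z \<in> {g \<in> G. clg g = w}"
  show "x = y \<or> x = z \<or> y = z"
  proof (rule ccontr)
    assume ne: "\<not> (x = y \<or> x = z \<or> y = z)"
    have G3: "x \<in> G" "y \<in> G" "z \<in> G" and c3: "clg x = w" "clg y = w" "clg z = w" using xyz by auto
    show False
      using three_intervals[of "LO x" "HI x" "LO y" "HI y" "LO z" "HI z" "snd w"]
        iv[OF G3(1)] iv[OF G3(2)] iv[OF G3(3)] c3
        dj[OF G3(1) G3(2)] dj[OF G3(1) G3(3)] dj[OF G3(2) G3(3)] ne by simp
  qed
qed

lemma card_G: "card G \<le> 2 * card V"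
proof -
  have "G \<subseteq> (\<Union>w\<in>V. {g \<in> G. clg g = w})"
  proof
    fix g assume gG: "g \<in> G"
    obtain a b b' where g: "g = (a,b,b')" by (cases g) auto
    have "clg g \<in> V" using cl_prop(1)[of a b b'] gG g unfolding W_def clg_def by auto
    then show "g \<in> (\<Union>w\<in>V. {g \<in> G. clg g = w})" using gG by blast
  qed
  then have "card G \<le> card (\<Union>w\<in>V. {g \<in> G. clg g = w})"
    by (rule card_mono[rotated]) (use finV finG in auto)
  also have "\<dots> \<le> (\<Sum>w\<in>V. card {g \<in> G. clg g = w})" by (rule card_UN_le[OF finV])
  also have "\<dots> \<le> (\<Sum>w\<in>V. 2)" by (rule sum_mono) (rule fiber)
  finally show ?thesis by simp
qed

theorem planar: "card E \<le> 3 * card V"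
  using card_E_le card_G by linarith

end


definition CR :: "((real \<times> real) \<times> (real \<times> real)) set \<Rightarrow> (((real \<times> real) \<times> (real \<times> real)) \<times> ((real \<times> real) \<times> (real \<times> real))) set" where
  "CR E = {q \<in> E \<times> E. fst q \<noteq> snd q \<and> oseg (fst (fst q)) (snd (fst q)) \<inter> oseg (fst (snd q)) (snd (snd q)) \<noteq> {}}"

lemma geo_sub: "geo V E \<Longrightarrow> E' \<subseteq> E \<Longrightarrow> geo V E'"
  unfolding geo_def by blast

lemma geo_subV:
  assumes "geo V E" "S \<subseteq> V"
  shows "geo S {e \<in> E. fst e \<in> S \<and> snd e \<in> S}"
proof (rule geo.intro)
  show "finite S" using geo.finV[OF assms(1)] assms(2) finite_subset by blast
  show "inj_on fst S" using geo.injx[OF assms(1)] assms(2) inj_on_subset by blast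
  show "{e \<in> E. fst e \<in> S \<and> snd e \<in> S} \<subseteq> S \<times> S" by (simp add: mem_Times_iff subset_iff)
  show "fst a < fst b" if "(a, b) \<in> {e \<in> E. fst e \<in> S \<and> snd e \<in> S}" for a b
    using geo.Eor[OF assms(1)] that by simp
  show "v \<notin> oseg a b" if "(a, b) \<in> {e \<in> E. fst e \<in> S \<and> snd e \<in> S}" "v \<in> S" for a b v
    using geo.novert[OF assms(1)] that assms(2) by blast
qed

lemma crossing_linear_aux:
  "finite E \<Longrightarrow> geo V E \<Longrightarrow> card E \<le> 3 * card V + card (CR E)"
proof (induction E rule: finite_psubset_induct)
  case (psubset E)
  show ?case
  proof (cases "CR E = {}")
    case True
    have "plane V E"
    proof (rule plane.intro[OF psubset.prems], rule plane_axioms.intro)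
      fix a b c d assume "(a,b) \<in> E" "(c,d) \<in> E" "(a,b) \<noteq> (c,d)"
      then have "((a,b),(c,d)) \<notin> CR E" using True by simp
      then have "a = c \<and> b = d \<or> oseg a b \<inter> oseg c d = {}" using \<open>(a,b) \<in> E\<close> \<open>(c,d) \<in> E\<close> unfolding CR_def by simp
      then show "oseg a b \<inter> oseg c d = {}" using \<open>(a,b) \<noteq> (c,d)\<close> by blast
    qed
    then show ?thesis using plane.planar[of V E] by linarith
  next
    case False
    then obtain e1 e2 where c: "(e1,e2) \<in> CR E" by (metis ex_in_conv prod.exhaust)
    then have e1: "e1 \<in> E" unfolding CR_def by simp
    define E' where "E' = E - {e1}"
    have sub: "E' \<subset> E" using e1 E'_def by blast
    have "geo V E'" using geo_sub[OF psubset.prems] E'_def by blast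
    then have IH: "card E' \<le> 3 * card V + card (CR E')" using psubset.IH[OF sub] by blast
    have fCR: "finite (CR E)" unfolding CR_def using psubset.hyps by simp
    have "CR E' \<subseteq> CR E - {(e1,e2)}"
    proof
      fix q assume q: "q \<in> CR E'"
      then have "fst q \<in> E'" "snd q \<in> E'" "fst q \<noteq> snd q"
        "oseg (fst (fst q)) (snd (fst q)) \<inter> oseg (fst (snd q)) (snd (snd q)) \<noteq> {}"
        unfolding CR_def mem_Collect_eq mem_Times_iff by blast+
      then have "fst q \<in> E" "snd q \<in> E" "fst q \<noteq> e1" unfolding E'_def by simp_all
      then have "q \<in> CR E" "q \<noteq> (e1,e2)" using \<open>fst q \<noteq> snd q\<close> \<open>oseg (fst (fst q)) (snd (fst q)) \<inter> oseg (fst (snd q)) (snd (snd q)) \<noteq> {}\<close>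
        unfolding CR_def mem_Collect_eq mem_Times_iff by auto
      then show "q \<in> CR E - {(e1,e2)}" by simp
    qed
    then have "card (CR E') \<le> card (CR E - {(e1,e2)})" by (rule card_mono[OF finite_Diff[OF fCR]])
    also have "\<dots> < card (CR E)" by (rule card_Diff1_less[OF fCR c])
    finally have "card (CR E') < card (CR E)" .
    moreover have "card E = card E' + 1" using card.remove[OF psubset.hyps e1] E'_def by simp
    ultimately show ?thesis using IH by linarith
  qed
qed

lemma crossing_linear: "geo V E \<Longrightarrow> card E \<le> 3 * card V + card (CR E)"
  by (rule crossing_linear_aux[OF geo.finE])

lemma subset_weight:
  fixes p :: real
  assumes "finite V" "A \<subseteq> V"
  shows "(\<Sum>S\<in>Pow V. (\<Prod>x\<in>S. p) * (\<Prod>x\<in>V-S. 1-p) * (if A \<subseteq> S then 1 else 0)) = p ^ card A"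
proof -
  define f2 where "f2 x = (if x \<in> A then 0 else 1 - p)" for x
  have "(\<Prod>x\<in>V. p + f2 x) = (\<Sum>X\<in>Pow V. (\<Prod>x\<in>X. p) * (\<Prod>x\<in>V-X. f2 x))"
    by (rule prod_add[OF assms(1)])
  moreover have "(\<Prod>x\<in>V. p + f2 x) = p ^ card A"
  proof -
    have "(\<Prod>x\<in>V. p + f2 x) = (\<Prod>x\<in>V. if x \<in> A then p else 1)" unfolding f2_def by (rule prod.cong) auto
    also have "\<dots> = (\<Prod>x\<in>V \<inter> A. p)" using assms(1) by (simp add: prod.If_cases)
    also have "V \<inter> A = A" using assms(2) by blast
    finally show ?thesis by simp
  qed
  moreover have "(\<Prod>x\<in>V-X. f2 x) = (\<Prod>x\<in>V-X. 1-p) * (if A \<subseteq> X then 1 else 0)" if "X \<in> Pow V" for X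
  proof (cases "A \<subseteq> X")
    case True
    then have "(\<Prod>x\<in>V-X. f2 x) = (\<Prod>x\<in>V-X. 1-p)" unfolding f2_def by (intro prod.cong) auto
    then show ?thesis using True by simp
  next
    case False
    then obtain x where "x \<in> A" "x \<notin> X" by blast
    then have "x \<in> V - X" "f2 x = 0" using assms(2) f2_def by auto
    then have "(\<Prod>x\<in>V-X. f2 x) = 0" using assms(1) by (meson finite_Diff prod_zero_iff)
    then show ?thesis using False by simp
  qed
  ultimately show ?thesis by (simp add: mult.assoc)
qed

lemma subset_weight_count:
  fixes p :: real and Ob :: "'b set" and ends :: "'b \<Rightarrow> 'a set"
  assumes "finite V" "finite Ob" "\<And>ob. ob \<in> Ob \<Longrightarrow> ends ob \<subseteq> V"
  shows "(\<Sum>S\<in>Pow V. (\<Prod>x\<in>S. p) * (\<Prod>x\<in>V-S. 1-p) * real (card {ob \<in> Ob. ends ob \<subseteq> S})) = (\<Sum>ob\<in>Ob. p ^ card (ends ob))"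
proof -
  have "(\<Sum>S\<in>Pow V. (\<Prod>x\<in>S. p) * (\<Prod>x\<in>V-S. 1-p) * real (card {ob \<in> Ob. ends ob \<subseteq> S}))
      = (\<Sum>S\<in>Pow V. \<Sum>ob\<in>Ob. (\<Prod>x\<in>S. p) * (\<Prod>x\<in>V-S. 1-p) * (if ends ob \<subseteq> S then 1 else 0))"
  proof (rule sum.cong[OF refl])
    fix S
    have "real (card {ob \<in> Ob. ends ob \<subseteq> S}) = (\<Sum>ob\<in>Ob. if ends ob \<subseteq> S then 1 else 0)"
    proof -
      have "{ob \<in> Ob. ends ob \<subseteq> S} = Ob \<inter> {ob. ends ob \<subseteq> S}" by blast
      then show ?thesis using assms(2) by (simp add: sum.If_cases)
    qed
    then show "(\<Prod>x\<in>S. p) * (\<Prod>x\<in>V-S. 1-p) * real (card {ob \<in> Ob. ends ob \<subseteq> S})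
      = (\<Sum>ob\<in>Ob. (\<Prod>x\<in>S. p) * (\<Prod>x\<in>V-S. 1-p) * (if ends ob \<subseteq> S then 1 else 0))"
      by (simp add: sum_distrib_left)
  qed
  also have "\<dots> = (\<Sum>ob\<in>Ob. \<Sum>S\<in>Pow V. (\<Prod>x\<in>S. p) * (\<Prod>x\<in>V-S. 1-p) * (if ends ob \<subseteq> S then 1 else 0))"
    by (rule sum.swap)
  also have "\<dots> = (\<Sum>ob\<in>Ob. p ^ card (ends ob))"
    by (rule sum.cong[OF refl]) (rule subset_weight[OF assms(1,3)])
  finally show ?thesis .
qed


context geo
begin

lemma CR_distinct:
  assumes "((a,b),(c,d)) \<in> CR E"
  shows "card {a,b,c,d} = 4"
proof -
  have ab: "(a,b) \<in> E" and cd: "(c,d) \<in> E" and ne: "(a,b) \<noteq> (c,d)" and ov: "oseg a b \<inter> oseg c d \<noteq> {}"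
    using assms unfolding CR_def by auto
  obtain z where z: "z \<in> oseg a b" "z \<in> oseg c d" using ov by blast
  have zab: "fst a < fst z" "fst z < fst b" "snd z = snd a + slope a b * (fst z - fst a)" using z(1) unfolding oseg_def by auto
  have zcd: "fst c < fst z" "fst z < fst d" "snd z = snd c + slope c d * (fst z - fst c)" using z(2) unfolding oseg_def by auto
  have V4: "a \<in> V" "b \<in> V" "c \<in> V" "d \<in> V" using EV[of a b] EV[of c d] ab cd by auto
  have 1: "a \<noteq> b" using Eor[OF ab] by auto
  have 2: "c \<noteq> d" using Eor[OF cd] by auto
  have 3: "a \<noteq> d" using zab zcd by auto
  have 4: "b \<noteq> c" using zab zcd by auto
  have 5: "a \<noteq> c"
  proof
    assume ac: "a = c"
    have "slope a b * (fst z - fst a) = slope a d * (fst z - fst a)" using zab zcd ac by simp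
    then have "slope a b = slope a d" using zab by simp
    then have "b = d" using slope_inj ab cd ac by blast
    then show False using ne ac by simp
  qed
  have 6: "b \<noteq> d"
  proof
    assume bd: "b = d"
    have eb: "snd b = snd a + slope a b * (fst b - fst a)" using slope_eq[of a b] Eor[OF ab] by simp
    have ed: "snd d = snd c + slope c d * (fst d - fst c)" using slope_eq[of c d] Eor[OF cd] by simp
    have "snd b - snd z = slope a b * (fst b - fst z)" using eb zab by (simp add: algebra_simps)
    moreover have "snd b - snd z = slope c d * (fst b - fst z)" using ed zcd bd by (simp add: algebra_simps)
    ultimately have "slope a b * (fst b - fst z) = slope c d * (fst b - fst z)" by linarith
    then have s: "slope a b = slope c d" using zab(2) by auto
    have "fst a \<noteq> fst c" using 5 injx V4 by (metis inj_onD)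
    then show False
    proof (cases "fst a < fst c")
      case True
      have "snd c = snd a + slope a b * (fst c - fst a)" using eb ed bd s by (simp add: algebra_simps)
      then have "c \<in> oseg a b" unfolding oseg_def using True zcd zab by simp
      then show False using novert[OF ab V4(3)] by simp
    next
      case False
      then have ca: "fst c < fst a" using \<open>fst a \<noteq> fst c\<close> by simp
      have "snd a = snd c + slope c d * (fst a - fst c)" using eb ed bd s by (simp add: algebra_simps)
      then have "a \<in> oseg c d" unfolding oseg_def using ca zcd zab bd by simp
      then show False using novert[OF cd V4(1)] by simp
    qed
  qed
  show ?thesis using 1 2 3 4 5 6 by simp
qed

lemma crossing_weighted:
  fixes p :: real
  assumes p: "0 \<le> p" "p \<le> 1"
  shows "p^2 * card E \<le> 3 * p * card V + p^4 * card (CR E)"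
proof -
  define w where "w S = (\<Prod>x\<in>S. p) * (\<Prod>x\<in>V-S. 1-p)" for S
  have w0: "w S \<ge> 0" for S unfolding w_def using p by (simp add: prod_nonneg)
  define e2 where "e2 (e :: (real\<times>real)\<times>(real\<times>real)) = {fst e, snd e}" for e
  define e4 where "e4 (q :: ((real\<times>real)\<times>(real\<times>real))\<times>((real\<times>real)\<times>(real\<times>real))) = {fst (fst q), snd (fst q), fst (snd q), snd (snd q)}" for q
  define e1 where "e1 (v :: real \<times> real) = {v}" for v
  have ineq: "real (card {e \<in> E. e2 e \<subseteq> S}) \<le> 3 * real (card {v \<in> V. e1 v \<subseteq> S}) + real (card {q \<in> CR E. e4 q \<subseteq> S})"
    if "S \<in> Pow V" for S
  proof -
    have SV: "S \<subseteq> V" using that by simp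
    define ES where "ES = {e \<in> E. fst e \<in> S \<and> snd e \<in> S}"
    have h: "card ES \<le> 3 * card S + card (CR ES)"
      using crossing_linear[OF geo_subV[OF geo_axioms SV]] ES_def by simp
    have "ES = {e \<in> E. e2 e \<subseteq> S}" unfolding ES_def e2_def by simp
    then have c1: "card ES = card {e \<in> E. e2 e \<subseteq> S}" by simp
    have "S = {v \<in> V. e1 v \<subseteq> S}" unfolding e1_def using SV by blast
    then have c2: "card S = card {v \<in> V. e1 v \<subseteq> S}" by simp
    have "CR ES = {q \<in> CR E. e4 q \<subseteq> S}"
    proof (rule set_eqI)
      fix q
      show "q \<in> CR ES \<longleftrightarrow> q \<in> {q \<in> CR E. e4 q \<subseteq> S}"
        unfolding CR_def ES_def e4_def mem_Collect_eq mem_Times_iff insert_subset by blast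
    qed
    then have c3: "card (CR ES) = card {q \<in> CR E. e4 q \<subseteq> S}" by simp
    have h2: "card {e \<in> E. e2 e \<subseteq> S} \<le> 3 * card {v \<in> V. e1 v \<subseteq> S} + card {q \<in> CR E. e4 q \<subseteq> S}"
      using h unfolding c1 c2 c3 .
    have "real (card {e \<in> E. e2 e \<subseteq> S}) \<le> real (3 * card {v \<in> V. e1 v \<subseteq> S} + card {q \<in> CR E. e4 q \<subseteq> S})"
      using h2 by (simp only: of_nat_le_iff)
    then show ?thesis by simp
  qed
  have "(\<Sum>S\<in>Pow V. w S * real (card {e \<in> E. e2 e \<subseteq> S}))
      \<le> (\<Sum>S\<in>Pow V. w S * (3 * real (card {v \<in> V. e1 v \<subseteq> S}) + real (card {q \<in> CR E. e4 q \<subseteq> S})))"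
    by (rule sum_mono) (rule mult_left_mono[OF ineq w0])
  also have "\<dots> = 3 * (\<Sum>S\<in>Pow V. w S * real (card {v \<in> V. e1 v \<subseteq> S})) + (\<Sum>S\<in>Pow V. w S * real (card {q \<in> CR E. e4 q \<subseteq> S}))"
  proof -
    have "(\<Sum>S\<in>Pow V. w S * (3 * real (card {v \<in> V. e1 v \<subseteq> S}) + real (card {q \<in> CR E. e4 q \<subseteq> S})))
       = (\<Sum>S\<in>Pow V. 3 * (w S * real (card {v \<in> V. e1 v \<subseteq> S})) + w S * real (card {q \<in> CR E. e4 q \<subseteq> S}))"
      by (rule sum.cong[OF refl]) (simp add: algebra_simps)
    also have "\<dots> = 3 * (\<Sum>S\<in>Pow V. w S * real (card {v \<in> V. e1 v \<subseteq> S})) + (\<Sum>S\<in>Pow V. w S * real (card {q \<in> CR E. e4 q \<subseteq> S}))"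
      by (simp add: sum.distrib sum_distrib_left)
    finally show ?thesis .
  qed
  finally have main: "(\<Sum>S\<in>Pow V. w S * real (card {e \<in> E. e2 e \<subseteq> S}))
      \<le> 3 * (\<Sum>S\<in>Pow V. w S * real (card {v \<in> V. e1 v \<subseteq> S})) + (\<Sum>S\<in>Pow V. w S * real (card {q \<in> CR E. e4 q \<subseteq> S}))" .
  have s1: "(\<Sum>S\<in>Pow V. w S * real (card {e \<in> E. e2 e \<subseteq> S})) = p^2 * card E"
  proof -
    have "(\<Sum>S\<in>Pow V. w S * real (card {e \<in> E. e2 e \<subseteq> S})) = (\<Sum>e\<in>E. p ^ card (e2 e))"
      unfolding w_def
    proof (rule subset_weight_count[OF finV finE])
      fix e assume "e \<in> E"
      then have "e \<in> V \<times> V" using Esub by blast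
      then show "e2 e \<subseteq> V" unfolding e2_def by (simp add: mem_Times_iff)
    qed
    also have "\<dots> = (\<Sum>e\<in>E. p ^ 2)"
    proof (rule sum.cong[OF refl])
      fix e assume "e \<in> E"
      then have "fst e \<noteq> snd e" using Eor[of "fst e" "snd e"] by auto
      then show "p ^ card (e2 e) = p ^ 2" unfolding e2_def by (simp add: power2_eq_square)
    qed
    finally show ?thesis by simp
  qed
  have s2: "(\<Sum>S\<in>Pow V. w S * real (card {v \<in> V. e1 v \<subseteq> S})) = p * card V"
  proof -
    have "(\<Sum>S\<in>Pow V. w S * real (card {v \<in> V. e1 v \<subseteq> S})) = (\<Sum>v\<in>V. p ^ card (e1 v))"
      unfolding w_def by (rule subset_weight_count[OF finV finV]) (auto simp: e1_def)
    also have "\<dots> = (\<Sum>v\<in>V. p)" unfolding e1_def by simp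
    finally show ?thesis by simp
  qed
  have s3: "(\<Sum>S\<in>Pow V. w S * real (card {q \<in> CR E. e4 q \<subseteq> S})) = p^4 * card (CR E)"
  proof -
    have fCR: "finite (CR E)" unfolding CR_def using finE by simp
    have "(\<Sum>S\<in>Pow V. w S * real (card {q \<in> CR E. e4 q \<subseteq> S})) = (\<Sum>q\<in>CR E. p ^ card (e4 q))"
      unfolding w_def
    proof (rule subset_weight_count[OF finV fCR])
      fix q assume "q \<in> CR E"
      then have "fst q \<in> E" "snd q \<in> E" unfolding CR_def by auto
      then show "e4 q \<subseteq> V" unfolding e4_def using EV[of "fst (fst q)" "snd (fst q)"] EV[of "fst (snd q)" "snd (snd q)"] by auto
    qed
    also have "\<dots> = (\<Sum>q\<in>CR E. p ^ 4)"
    proof (rule sum.cong[OF refl])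
      fix q assume q: "q \<in> CR E"
      obtain a b c d where "q = ((a,b),(c,d))" by (metis prod.exhaust)
      then have "card (e4 q) = 4" using CR_distinct q unfolding e4_def by simp
      then show "p ^ card (e4 q) = p ^ 4" by simp
    qed
    finally show ?thesis by simp
  qed
  show ?thesis using main s1 s2 s3 by simp
qed

lemma crossing_lemma:
  assumes "real (card E) \<ge> 4 * real (card V)" "card E > 0"
  shows "real (card E) ^ 3 \<le> 64 * real (card V) ^ 2 * real (card (CR E))"
proof -
  define e where "e = real (card E)"
  define v where "v = real (card V)"
  define c where "c = real (card (CR E))"
  have e0: "e > 0" using assms e_def by simp
  have v0: "v > 0"
  proof (rule ccontr)
    assume "\<not> v > 0"
    then have "V = {}" using finV v_def by simp
    then have "E = {}" using Esub by auto
    then show False using assms by simp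
  qed
  define p where "p = 4 * v / e"
  have p0: "0 \<le> p" "p \<le> 1" using assms e0 v0 unfolding p_def e_def v_def by (simp_all add: field_simps)
  have "p^2 * e \<le> 3 * p * v + p^4 * c" using crossing_weighted[OF p0] e_def v_def c_def by simp
  then have "16 * v^2 / e \<le> 12 * v^2 / e + 256 * v^4 * c / e^4"
    unfolding p_def using e0 by (simp add: field_simps power2_eq_square power4_eq_xxxx)
  then have "4 * v^2 / e \<le> 256 * v^4 * c / e^4" by simp
  then have "4 * v^2 * e^3 \<le> 256 * v^4 * c" using e0 by (simp add: field_simps power_def)
  then have "v^2 * (4 * e^3) \<le> v^2 * (256 * v^2 * c)" by (simp add: algebra_simps power_def)
  then have "4 * e^3 \<le> 256 * v^2 * c" using v0 by (simp add: mult_le_cancel_left)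
  then show ?thesis unfolding e_def v_def c_def by (simp add: mult_ac)
qed

end


lemma line_mem: "z \<in> {(x, y). a * x + b * y = c} \<longleftrightarrow> a * fst z + b * snd z = (c::real)"
  by (cases z) simp

lemma is_lineE:
  assumes "is_line l"
  obtains a b c where "a \<noteq> 0 \<or> b \<noteq> 0" "\<And>z. z \<in> l \<longleftrightarrow> a * fst z + b * snd z = c"
  using assms unfolding is_line_def using line_mem by metis

lemma oseg_line:
  assumes "is_line l" "p \<in> l" "q \<in> l" "fst p < fst q" "z \<in> oseg p q"
  shows "z \<in> l"
proof -
  obtain a b c where l: "\<And>z. z \<in> l \<longleftrightarrow> a * fst z + b * snd z = c" using is_lineE[OF assms(1)] by metis
  have p: "a * fst p + b * snd p = c" and q: "a * fst q + b * snd q = c" using assms l by auto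
  define s where "s = slope p q"
  have z: "snd z = snd p + s * (fst z - fst p)" using assms(5) unfolding oseg_def s_def by simp
  have "s * (fst q - fst p) = snd q - snd p" unfolding s_def slope_def using assms(4) by simp
  then have "b * s * (fst q - fst p) = b * (snd q - snd p)" by (simp add: mult.assoc)
  also have "\<dots> = - a * (fst q - fst p)"
  proof -
    have "b * (snd q - snd p) = b * snd q - b * snd p" "- a * (fst q - fst p) = a * fst p - a * fst q" by (simp_all add: algebra_simps)
    then show ?thesis using p q by linarith
  qed
  finally have "b * s * (fst q - fst p) = - a * (fst q - fst p)" .
  then have "(b * s) * (fst q - fst p) = (- a) * (fst q - fst p)" by simp
  then have bs: "b * s = - a" using assms(4) by (simp only: mult_right_cancel)
  have "a * fst z + b * snd z = a * fst z + b * snd p + (b * s) * (fst z - fst p)" by (subst z) (simp add: algebra_simps)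
  also have "\<dots> = c" using bs p by (simp add: algebra_simps)
  finally show ?thesis using l by simp
qed

lemma cross_zero:
  fixes a b u1 u2 v1 v2 :: real
  assumes "a \<noteq> 0 \<or> b \<noteq> 0" "a * u1 + b * u2 = 0" "a * v1 + b * v2 = 0"
  shows "u1 * v2 = u2 * v1"
proof -
  have "a * (u1*v2 - u2*v1) = - u2 * (a*v1 + b*v2) + v2 * (a*u1 + b*u2)" by algebra
  then have 1: "a * (u1*v2 - u2*v1) = 0" using assms by simp
  have "b * (u1*v2 - u2*v1) = u1 * (a*v1 + b*v2) - v1 * (a*u1 + b*u2)" by algebra
  then have 2: "b * (u1*v2 - u2*v1) = 0" using assms by simp
  show ?thesis using 1 2 assms(1) by auto
qed

lemma cross_back:
  fixes a b u1 u2 v1 v2 :: real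
  assumes "u1 \<noteq> 0 \<or> u2 \<noteq> 0" "u1 * v2 = u2 * v1" "a * u1 + b * u2 = 0"
  shows "a * v1 + b * v2 = 0"
proof -
  have "u1 * (a*v1 + b*v2) = v1 * (a*u1 + b*u2) + b * (u1*v2 - u2*v1)" by algebra
  then have 1: "u1 * (a*v1 + b*v2) = 0" using assms by simp
  have "u2 * (a*v1 + b*v2) = v2 * (a*u1 + b*u2) - a * (u1*v2 - u2*v1)" by algebra
  then have 2: "u2 * (a*v1 + b*v2) = 0" using assms by simp
  show ?thesis using 1 2 assms(1) by auto
qed

lemma line_sub:
  assumes "is_line l1" "is_line l2" "p \<noteq> q" "p \<in> l1" "q \<in> l1" "p \<in> l2" "q \<in> l2"
  shows "l1 \<subseteq> l2"
proof
  fix z assume z: "z \<in> l1"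
  obtain a b c where ab: "a \<noteq> 0 \<or> b \<noteq> 0" and l: "\<And>z. z \<in> l1 \<longleftrightarrow> a * fst z + b * snd z = c"
    using is_lineE[OF assms(1)] by metis
  obtain a' b' c' where l': "\<And>z. z \<in> l2 \<longleftrightarrow> a' * fst z + b' * snd z = c'"
    using is_lineE[OF assms(2)] by metis
  define u1 where "u1 = fst q - fst p"
  define u2 where "u2 = snd q - snd p"
  define v1 where "v1 = fst z - fst p"
  define v2 where "v2 = snd z - snd p"
  have "a * u1 + b * u2 = 0" using l assms(4,5) unfolding u1_def u2_def by (simp add: algebra_simps)
  moreover have "a * v1 + b * v2 = 0" using l assms(4) z unfolding v1_def v2_def by (simp add: algebra_simps)
  ultimately have cr: "u1 * v2 = u2 * v1" using cross_zero ab by blast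
  have u: "u1 \<noteq> 0 \<or> u2 \<noteq> 0" using assms(3) unfolding u1_def u2_def by (auto simp: prod_eq_iff)
  have "a' * u1 + b' * u2 = 0" using l' assms(6,7) unfolding u1_def u2_def by (simp add: algebra_simps)
  then have "a' * v1 + b' * v2 = 0" using cross_back[OF u cr] by blast
  then show "z \<in> l2" using l' assms(6) unfolding v1_def v2_def by (simp add: algebra_simps)
qed

lemma line_eq:
  assumes "is_line l1" "is_line l2" "p \<noteq> q" "p \<in> l1" "q \<in> l1" "p \<in> l2" "q \<in> l2"
  shows "l1 = l2"
  using line_sub[OF assms] line_sub[OF assms(2,1,3,6,7,4,5)] by blast

definition SE :: "(real \<times> real) set \<Rightarrow> (real \<times> real) set set \<Rightarrow> ((real \<times> real) \<times> (real \<times> real)) set" where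
  "SE P L = {e \<in> P \<times> P. fst (fst e) < fst (snd e) \<and> (\<exists>l\<in>L. fst e \<in> l \<and> snd e \<in> l \<and>
      (\<forall>r\<in>P. r \<in> l \<longrightarrow> \<not> (fst (fst e) < fst r \<and> fst r < fst (snd e))))}"

lemma SE_D:
  assumes "(p,q) \<in> SE P L"
  shows "p \<in> P" "q \<in> P" "fst p < fst q" "\<exists>l\<in>L. p \<in> l \<and> q \<in> l \<and> (\<forall>r\<in>P. r \<in> l \<longrightarrow> \<not> (fst p < fst r \<and> fst r < fst q))"
  using assms unfolding SE_def by auto

lemma SE_consec:
  assumes "(p,q) \<in> SE P L" "\<forall>l\<in>L. is_line l" "l \<in> L" "p \<in> l" "q \<in> l" "r \<in> P" "r \<in> l"
  shows "\<not> (fst p < fst r \<and> fst r < fst q)"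
proof -
  obtain l0 where l0: "l0 \<in> L" "p \<in> l0" "q \<in> l0" "\<forall>r\<in>P. r \<in> l0 \<longrightarrow> \<not> (fst p < fst r \<and> fst r < fst q)"
    using SE_D(4)[OF assms(1)] by blast
  have "p \<noteq> q" using SE_D(3)[OF assms(1)] by auto
  then have "l0 = l" using line_eq[of l0 l p q] assms l0 by blast
  then show ?thesis using l0 assms by blast
qed

lemma SE_geo:
  assumes "finite P" "inj_on fst P" "\<forall>l\<in>L. is_line l"
  shows "geo P (SE P L)"
proof (rule geo.intro)
  show "finite P" "inj_on fst P" using assms by auto
  show "SE P L \<subseteq> P \<times> P" unfolding SE_def by blast
  show "fst a < fst b" if "(a,b) \<in> SE P L" for a b using SE_D[OF that] by simp
  show "v \<notin> oseg a b" if ab: "(a,b) \<in> SE P L" and v: "v \<in> P" for a b v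
  proof
    assume vo: "v \<in> oseg a b"
    obtain l where l: "l \<in> L" "a \<in> l" "b \<in> l" using SE_D(4)[OF ab] by blast
    have "v \<in> l" using oseg_line[of l a b v] l assms(3) SE_D(3)[OF ab] vo by blast
    then have "\<not> (fst a < fst v \<and> fst v < fst b)" using SE_consec[OF ab assms(3) l v] by blast
    then show False using vo unfolding oseg_def by simp
  qed
qed


lemma card_incidences:
  assumes "finite P" "finite L"
  shows "card (incidences P L) = (\<Sum>l\<in>L. card (P \<inter> l))"
proof -
  have eq: "incidences P L = (\<lambda>x. (snd x, fst x)) ` (SIGMA l:L. P \<inter> l)"
  proof (rule set_eqI)
    fix x
    show "x \<in> incidences P L \<longleftrightarrow> x \<in> (\<lambda>x. (snd x, fst x)) ` (SIGMA l:L. P \<inter> l)"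
    proof
      assume "x \<in> incidences P L"
      then have "snd x \<in> L" "fst x \<in> P" "fst x \<in> snd x" unfolding incidences_def by (auto simp: case_prod_beta)
      then show "x \<in> (\<lambda>x. (snd x, fst x)) ` (SIGMA l:L. P \<inter> l)" by (intro image_eqI[of _ _ "(snd x, fst x)"]) auto
    next
      assume "x \<in> (\<lambda>x. (snd x, fst x)) ` (SIGMA l:L. P \<inter> l)"
      then obtain y where "y \<in> (SIGMA l:L. P \<inter> l)" "x = (snd y, fst y)" by blast
      then show "x \<in> incidences P L" unfolding incidences_def by (auto simp: case_prod_beta)
    qed
  qed
  have "inj_on (\<lambda>x. (snd x, fst x)) (SIGMA l:L. P \<inter> l)" by (rule inj_onI) (simp add: prod_eq_iff)
  then have "card (incidences P L) = card (SIGMA l:L. P \<inter> l)" unfolding eq by (rule card_image)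
  also have "\<dots> = (\<Sum>l\<in>L. card (P \<inter> l))" using assms by (simp add: card_SigmaI)
  finally show ?thesis .
qed

definition El where "El P L l = {e \<in> SE P L. fst e \<in> l \<and> snd e \<in> l}"

lemma El_card:
  assumes "finite P" "inj_on fst P" "\<forall>l\<in>L. is_line l" "l \<in> L"
  shows "card (P \<inter> l) \<le> card (El P L l) + 1"
proof (cases "P \<inter> l = {}")
  case True then show ?thesis by simp
next
  case False
  define Q where "Q = P \<inter> l"
  have fQ: "finite Q" using assms Q_def by simp
  have "Max (fst ` Q) \<in> fst ` Q" using fQ False Q_def by simp
  then obtain m where m: "m \<in> Q" "fst m = Max (fst ` Q)" by auto
  have injQ: "inj_on fst Q" using assms(2) Q_def inj_on_subset by blast
  define nxt where "nxt (p :: real \<times> real) = (SOME r. r \<in> Q \<and> fst r = Min (fst ` {r \<in> Q. fst p < fst r}))" for p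
  have mem: "m \<in> {r \<in> Q. fst p < fst r}" if "p \<in> Q - {m}" for p
  proof -
    have pQ: "p \<in> Q" "p \<noteq> m" using that by auto
    have "fst p \<le> fst m" using m fQ pQ by simp
    moreover have "fst p \<noteq> fst m"
    proof
      assume "fst p = fst m"
      then have "p = m" using inj_onD[OF injQ _ pQ(1) m(1)] by blast
      then show False using pQ by simp
    qed
    ultimately show ?thesis using m by simp
  qed
  have nxt: "nxt p \<in> Q \<and> fst (nxt p) = Min (fst ` {r \<in> Q. fst p < fst r})" if "p \<in> Q - {m}" for p
  proof -
    have ne: "fst ` {r \<in> Q. fst p < fst r} \<noteq> {}" using mem[OF that] by blast
    have "Min (fst ` {r \<in> Q. fst p < fst r}) \<in> fst ` {r \<in> Q. fst p < fst r}" using ne fQ by simp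
    then have "\<exists>r. r \<in> Q \<and> fst r = Min (fst ` {r \<in> Q. fst p < fst r})" by auto
    then show ?thesis unfolding nxt_def by (rule someI_ex)
  qed
  have nxt_in: "(p, nxt p) \<in> El P L l" if p: "p \<in> Q - {m}" for p
  proof -
    have n: "nxt p \<in> Q" "fst (nxt p) = Min (fst ` {r \<in> Q. fst p < fst r})" using nxt[OF p] by auto
    have fin: "finite (fst ` {r \<in> Q. fst p < fst r})" using fQ by simp
    have ne: "fst ` {r \<in> Q. fst p < fst r} \<noteq> {}" using mem[OF p] by blast
    have "fst (nxt p) \<in> fst ` {r \<in> Q. fst p < fst r}" unfolding n(2) using Min_in[OF fin ne] .
    then have lt: "fst p < fst (nxt p)" by auto
    have cons: "\<forall>r\<in>P. r \<in> l \<longrightarrow> \<not> (fst p < fst r \<and> fst r < fst (nxt p))"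
    proof (intro ballI impI notI)
      fix r assume r: "r \<in> P" "r \<in> l" "fst p < fst r \<and> fst r < fst (nxt p)"
      then have "fst r \<in> fst ` {r \<in> Q. fst p < fst r}" using Q_def by auto
      then have "fst (nxt p) \<le> fst r" using n fin by simp
      then show False using r by simp
    qed
    have "p \<in> P" "p \<in> l" "nxt p \<in> P" "nxt p \<in> l" using p n Q_def by auto
    then show ?thesis unfolding El_def SE_def using lt cons assms(4) by auto
  qed
  have "inj_on (\<lambda>p. (p, nxt p)) (Q - {m})" by (rule inj_onI) simp
  moreover have "(\<lambda>p. (p, nxt p)) ` (Q - {m}) \<subseteq> El P L l" using nxt_in by blast
  moreover have "finite (El P L l)"
  proof -
    have "El P L l \<subseteq> P \<times> P" unfolding El_def SE_def by blast
    then show ?thesis using assms(1) finite_subset by blast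
  qed
  ultimately have "card (Q - {m}) \<le> card (El P L l)" by (intro card_inj_on_le) auto
  moreover have "card Q = card (Q - {m}) + 1" using card.remove[OF fQ m(1)] by simp
  ultimately show ?thesis using Q_def by simp
qed

lemma El_disj:
  assumes "\<forall>l\<in>L. is_line l" "l1 \<in> L" "l2 \<in> L" "l1 \<noteq> l2"
  shows "El P L l1 \<inter> El P L l2 = {}"
proof (rule ccontr)
  assume "El P L l1 \<inter> El P L l2 \<noteq> {}"
  then obtain e where e: "e \<in> SE P L" "fst e \<in> l1" "snd e \<in> l1" "fst e \<in> l2" "snd e \<in> l2" unfolding El_def by auto
  have "fst (fst e) < fst (snd e)" using e(1) unfolding SE_def by auto
  then have "fst e \<noteq> snd e" by auto
  then have "l1 = l2" using line_eq[of l1 l2 "fst e" "snd e"] assms e by blast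
  then show False using assms by simp
qed

lemma SE_count:
  assumes "finite P" "inj_on fst P" "finite L" "\<forall>l\<in>L. is_line l"
  shows "card (incidences P L) \<le> card (SE P L) + card L"
proof -
  have fEl: "finite (El P L l)" for l
  proof -
    have "El P L l \<subseteq> P \<times> P" unfolding El_def SE_def by blast
    then show ?thesis using assms(1) finite_subset by blast
  qed
  have "card (incidences P L) = (\<Sum>l\<in>L. card (P \<inter> l))" by (rule card_incidences[OF assms(1,3)])
  also have "\<dots> \<le> (\<Sum>l\<in>L. card (El P L l) + 1)" by (rule sum_mono) (rule El_card[OF assms(1,2,4)])
  also have "\<dots> = (\<Sum>l\<in>L. card (El P L l)) + card L" by (simp add: sum.distrib del: Suc_eq_plus1 add_Suc_right add_Suc)
  also have "(\<Sum>l\<in>L. card (El P L l)) = card (\<Union>l\<in>L. El P L l)"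
    by (rule card_UN_disjoint[symmetric]) (use assms(3) fEl El_disj[OF assms(4)] in auto)
  also have "card (\<Union>l\<in>L. El P L l) \<le> card (SE P L)"
  proof (rule card_mono)
    have "SE P L \<subseteq> P \<times> P" unfolding SE_def by blast
    then show "finite (SE P L)" using assms(1) finite_subset by blast
    show "(\<Union>l\<in>L. El P L l) \<subseteq> SE P L" unfolding El_def by blast
  qed
  finally show ?thesis by simp
qed


lemma same_line_edges:
  assumes "inj_on fst P" "\<forall>l\<in>L. is_line l" "(p,q) \<in> SE P L" "(p',q') \<in> SE P L" "l \<in> L"
    "p \<in> l" "q \<in> l" "p' \<in> l" "q' \<in> l" "z \<in> oseg p q" "z \<in> oseg p' q'"
  shows "(p,q) = (p',q')"
proof -
  have z1: "fst p < fst z" "fst z < fst q" using assms(10) unfolding oseg_def by auto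
  have z2: "fst p' < fst z" "fst z < fst q'" using assms(11) unfolding oseg_def by auto
  have P: "p \<in> P" "q \<in> P" "p' \<in> P" "q' \<in> P" using SE_D[OF assms(3)] SE_D[OF assms(4)] by auto
  have c1: "\<not> (fst p < fst r \<and> fst r < fst q)" if "r \<in> P" "r \<in> l" for r
    using SE_consec[OF assms(3) assms(2) assms(5) assms(6) assms(7) that] .
  have c2: "\<not> (fst p' < fst r \<and> fst r < fst q')" if "r \<in> P" "r \<in> l" for r
    using SE_consec[OF assms(4) assms(2) assms(5) assms(8) assms(9) that] .
  have "fst p' \<le> fst p" using c1[OF P(3) assms(8)] z1 z2 by linarith
  moreover have "fst p \<le> fst p'" using c2[OF P(1) assms(6)] z1 z2 by linarith
  ultimately have "p = p'" using inj_onD[OF assms(1) _ P(1) P(3)] by simp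
  moreover have "fst q' \<le> fst q" using c2[OF P(2) assms(7)] z1 z2 by linarith
  moreover have "fst q \<le> fst q'" using c1[OF P(4) assms(9)] z1 z2 by linarith
  ultimately show ?thesis using inj_onD[OF assms(1) _ P(2) P(4)] by simp
qed

definition lineof where "lineof L e = (SOME l. l \<in> L \<and> fst e \<in> l \<and> snd e \<in> l)"

lemma lineof:
  assumes "e \<in> SE P L"
  shows "lineof L e \<in> L" "fst e \<in> lineof L e" "snd e \<in> lineof L e"
proof -
  have "\<exists>l. l \<in> L \<and> fst e \<in> l \<and> snd e \<in> l" using assms unfolding SE_def by blast
  then have "lineof L e \<in> L \<and> fst e \<in> lineof L e \<and> snd e \<in> lineof L e" unfolding lineof_def by (rule someI_ex)
  then show "lineof L e \<in> L" "fst e \<in> lineof L e" "snd e \<in> lineof L e" by auto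
qed

lemma SE_CR:
  assumes "finite L" "inj_on fst P" "\<forall>l\<in>L. is_line l"
  shows "card (CR (SE P L)) \<le> card L * card L"
proof -
  define f where "f q = (lineof L (fst q), lineof L (snd q))" for q :: "((real \<times> real) \<times> (real \<times> real)) \<times> ((real \<times> real) \<times> (real \<times> real))"
  have key: "\<exists>z. z \<in> lineof L (fst q) \<and> z \<in> lineof L (snd q) \<and> z \<in> oseg (fst (fst q)) (snd (fst q)) \<and> z \<in> oseg (fst (snd q)) (snd (snd q))
        \<and> lineof L (fst q) \<noteq> lineof L (snd q)" if q: "q \<in> CR (SE P L)" for q
  proof -
    have e: "fst q \<in> SE P L" "snd q \<in> SE P L" "fst q \<noteq> snd q" using q unfolding CR_def by auto
    obtain z where z: "z \<in> oseg (fst (fst q)) (snd (fst q))" "z \<in> oseg (fst (snd q)) (snd (snd q))"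
      using q unfolding CR_def by auto
    have l1: "lineof L (fst q) \<in> L" "fst (fst q) \<in> lineof L (fst q)" "snd (fst q) \<in> lineof L (fst q)" using lineof[OF e(1)] by auto
    have l2: "lineof L (snd q) \<in> L" "fst (snd q) \<in> lineof L (snd q)" "snd (snd q) \<in> lineof L (snd q)" using lineof[OF e(2)] by auto
    have o1: "fst (fst (fst q)) < fst (snd (fst q))" using e(1) unfolding SE_def by auto
    have o2: "fst (fst (snd q)) < fst (snd (snd q))" using e(2) unfolding SE_def by auto
    have zl1: "z \<in> lineof L (fst q)" using oseg_line[OF _ l1(2,3) o1 z(1)] assms(3) l1(1) by blast
    have zl2: "z \<in> lineof L (snd q)" using oseg_line[OF _ l2(2,3) o2 z(2)] assms(3) l2(1) by blast
    have "lineof L (fst q) \<noteq> lineof L (snd q)"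
    proof
      assume eq: "lineof L (fst q) = lineof L (snd q)"
      have "(fst (fst q), snd (fst q)) = (fst (snd q), snd (snd q))"
        using same_line_edges[OF assms(2,3), of "fst (fst q)" "snd (fst q)" "fst (snd q)" "snd (snd q)" "lineof L (fst q)" z]
          e l1 l2 z eq by simp
      then show False using e(3) by (simp add: prod_eq_iff)
    qed
    then show ?thesis using zl1 zl2 z by blast
  qed
  have "inj_on f (CR (SE P L))"
  proof (rule inj_onI)
    fix q q' assume q: "q \<in> CR (SE P L)" and q': "q' \<in> CR (SE P L)" and fq: "f q = f q'"
    have eq1: "lineof L (fst q) = lineof L (fst q')" and eq2: "lineof L (snd q) = lineof L (snd q')" using fq f_def by auto
    obtain z where z: "z \<in> lineof L (fst q)" "z \<in> lineof L (snd q)" "z \<in> oseg (fst (fst q)) (snd (fst q))" "z \<in> oseg (fst (snd q)) (snd (snd q))"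
      and ne: "lineof L (fst q) \<noteq> lineof L (snd q)" using key[OF q] by blast
    obtain z' where z': "z' \<in> lineof L (fst q')" "z' \<in> lineof L (snd q')" "z' \<in> oseg (fst (fst q')) (snd (fst q'))" "z' \<in> oseg (fst (snd q')) (snd (snd q'))"
      using key[OF q'] by blast
    have e: "fst q \<in> SE P L" "snd q \<in> SE P L" using q unfolding CR_def by auto
    have e': "fst q' \<in> SE P L" "snd q' \<in> SE P L" using q' unfolding CR_def by auto
    have Ls: "lineof L (fst q) \<in> L" "lineof L (snd q) \<in> L" using lineof e by auto
    have "z = z'"
    proof (rule ccontr)
      assume "z \<noteq> z'"
      then have "lineof L (fst q) = lineof L (snd q)"
        using line_eq[of "lineof L (fst q)" "lineof L (snd q)" z z'] assms(3) Ls z z' eq1 eq2 by auto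
      then show False using ne by simp
    qed
    have "(fst (fst q), snd (fst q)) = (fst (fst q'), snd (fst q'))"
      using same_line_edges[OF assms(2,3), of "fst (fst q)" "snd (fst q)" "fst (fst q')" "snd (fst q')" "lineof L (fst q)" z]
        e e' lineof[OF e(1)] lineof[OF e'(1)] eq1 z z' \<open>z = z'\<close> by simp
    moreover have "(fst (snd q), snd (snd q)) = (fst (snd q'), snd (snd q'))"
      using same_line_edges[OF assms(2,3), of "fst (snd q)" "snd (snd q)" "fst (snd q')" "snd (snd q')" "lineof L (snd q)" z]
        e e' lineof[OF e(2)] lineof[OF e'(2)] eq2 z z' \<open>z = z'\<close> by simp
    ultimately show "q = q'" by (simp add: prod_eq_iff)
  qed
  moreover have "f ` CR (SE P L) \<subseteq> L \<times> L"
  proof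
    fix x assume "x \<in> f ` CR (SE P L)"
    then obtain q where q: "q \<in> CR (SE P L)" "x = f q" by blast
    then have "fst q \<in> SE P L" "snd q \<in> SE P L" unfolding CR_def by auto
    then show "x \<in> L \<times> L" using lineof q(2) f_def by (simp add: mem_Times_iff)
  qed
  ultimately have "card (CR (SE P L)) \<le> card (L \<times> L)" using assms(1) by (intro card_inj_on_le) auto
  then show ?thesis by (simp add: card_cartesian_product)
qed

theorem ST_inj:
  assumes "finite P" "inj_on fst P" "finite L" "\<forall>l\<in>L. is_line l"
  shows "real (card (incidences P L)) \<le> 4 * real (card P) + real (card L) \<or>
         (real (card (incidences P L)) - real (card L)) ^ 3 \<le> 64 * real (card P) ^ 2 * real (card L) ^ 2"
proof -
  define I where "I = real (card (incidences P L))"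
  define e where "e = real (card (SE P L))"
  define v where "v = real (card P)"
  define n where "n = real (card L)"
  have Ie: "I \<le> e + n" using SE_count[OF assms] unfolding I_def e_def n_def by (metis of_nat_add of_nat_le_iff)
  have g: "geo P (SE P L)" by (rule SE_geo[OF assms(1,2,4)])
  have cr: "real (card (CR (SE P L))) \<le> n ^ 2"
    using SE_CR[OF assms(3,2,4)] unfolding n_def by (metis of_nat_le_iff of_nat_mult power2_eq_square)
  show ?thesis
  proof (cases "e \<ge> 4 * v \<and> card (SE P L) > 0")
    case True
    have "e ^ 3 \<le> 64 * v ^ 2 * real (card (CR (SE P L)))"
      using geo.crossing_lemma[OF g] True unfolding e_def v_def by simp
    also have "\<dots> \<le> 64 * v ^ 2 * n ^ 2" using cr by (simp add: mult_left_mono)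
    finally have e3: "e ^ 3 \<le> 64 * v ^ 2 * n ^ 2" .
    have "(I - n) ^ 3 \<le> e ^ 3"
    proof (cases "I - n \<ge> 0")
      case True then show ?thesis using Ie by (intro power_mono) auto
    next
      case False
      have "(I - n) ^ 3 = (I - n) * (I - n)^2" by (simp add: power_def)
      moreover have "(I - n)^2 \<ge> 0" by simp
      ultimately have "(I - n) ^ 3 \<le> 0" using False by (simp add: mult_nonpos_nonneg)
      moreover have "e ^ 3 \<ge> 0" using e_def by simp
      ultimately show ?thesis by linarith
    qed
    then show ?thesis using e3 unfolding I_def n_def v_def by simp
  next
    case False
    then have "e \<le> 4 * v" using e_def v_def by auto
    then show ?thesis using Ie unfolding I_def v_def n_def by simp
  qed
qed


definition shear :: "real \<Rightarrow> real \<times> real \<Rightarrow> real \<times> real" where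
  "shear t z = (fst z + t * snd z, snd z)"

lemma shear_inj: "inj (shear t)"
  by (rule injI) (auto simp: shear_def prod_eq_iff)

lemma shear_line:
  assumes "is_line l"
  shows "is_line (shear t ` l)"
proof -
  obtain a b c where ab: "a \<noteq> 0 \<or> b \<noteq> 0" and l: "l = {(x, y). a * x + b * y = c}"
    using assms unfolding is_line_def by blast
  have "shear t ` l = {(x, y). a * x + (b - a * t) * y = c}"
  proof (rule set_eqI)
    fix z
    show "z \<in> shear t ` l \<longleftrightarrow> z \<in> {(x, y). a * x + (b - a * t) * y = c}"
    proof
      assume "z \<in> shear t ` l"
      then obtain w where w: "w \<in> l" "z = shear t w" by blast
      have "a * fst w + b * snd w = c" using w(1) l line_mem by blast
      then show "z \<in> {(x, y). a * x + (b - a * t) * y = c}" using w(2) unfolding line_mem shear_def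
        by (simp add: algebra_simps)
    next
      assume "z \<in> {(x, y). a * x + (b - a * t) * y = c}"
      then have h: "a * fst z + (b - a * t) * snd z = c" using line_mem by blast
      define w where "w = (fst z - t * snd z, snd z)"
      have "a * fst w + b * snd w = c" using h unfolding w_def by (simp add: algebra_simps)
      then have "w \<in> l" using l line_mem by blast
      moreover have "shear t w = z" unfolding w_def shear_def by (simp add: prod_eq_iff)
      ultimately show "z \<in> shear t ` l" by blast
    qed
  qed
  moreover have "a \<noteq> 0 \<or> b - a * t \<noteq> 0" using ab by auto
  ultimately show ?thesis unfolding is_line_def by blast
qed

lemma good_shear:
  assumes "finite P"
  obtains t where "inj_on (\<lambda>z. fst (shear t z)) P"
proof -
  define B where "B = (\<lambda>pq. (fst (snd pq) - fst (fst pq)) / (snd (fst pq) - snd (snd pq))) ` (P \<times> P)"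
  have "finite B" unfolding B_def using assms by simp
  then obtain t where t: "t \<notin> B" using ex_new_if_finite[OF infinite_UNIV_char_0] by blast
  have "inj_on (\<lambda>z. fst (shear t z)) P"
  proof (rule inj_onI)
    fix p q assume pq: "p \<in> P" "q \<in> P" "fst (shear t p) = fst (shear t q)"
    then have e: "fst p + t * snd p = fst q + t * snd q" unfolding shear_def by simp
    show "p = q"
    proof (cases "snd p = snd q")
      case True
      then show ?thesis using e by (simp add: prod_eq_iff)
    next
      case False
      then have "t = (fst q - fst p) / (snd p - snd q)" using e by (simp add: field_simps)
      then have "t \<in> B" unfolding B_def using pq by (intro image_eqI[of _ _ "(p,q)"]) auto
      then show ?thesis using t by simp
    qed
  qed
  then show ?thesis using that by blast
qed

theorem ST:
  assumes "finite P" "finite L" "\<forall>l\<in>L. is_line l"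
  shows "real (card (incidences P L)) \<le> 4 * real (card P) + real (card L) \<or>
         (real (card (incidences P L)) - real (card L)) ^ 3 \<le> 64 * real (card P) ^ 2 * real (card L) ^ 2"
proof -
  obtain t where t: "inj_on (\<lambda>z. fst (shear t z)) P" using good_shear[OF assms(1)] by blast
  define T where "T = shear t"
  define P' where "P' = T ` P"
  define L' where "L' = (\<lambda>l. T ` l) ` L"
  have injT: "inj T" unfolding T_def by (rule shear_inj)
  have cP: "card P' = card P" unfolding P'_def using injT by (simp add: card_image inj_on_subset)
  have injL: "inj_on (\<lambda>l. T ` l) L" using injT by (simp add: inj_on_def inj_image_eq_iff)
  have cL: "card L' = card L" unfolding L'_def using injL by (simp add: card_image)
  have injP': "inj_on fst P'"
  proof (rule inj_onI)
    fix x y assume "x \<in> P'" "y \<in> P'" "fst x = fst y"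
    then obtain p q where "p \<in> P" "q \<in> P" "x = T p" "y = T q" unfolding P'_def by blast
    then show "x = y" using t \<open>fst x = fst y\<close> unfolding T_def by (metis inj_onD)
  qed
  have lines: "\<forall>l\<in>L'. is_line l" unfolding L'_def T_def using assms(3) shear_line by blast
  have fin: "finite P'" "finite L'" unfolding P'_def L'_def using assms by auto
  have inc: "incidences P' L' = (\<lambda>x. (T (fst x), T ` (snd x))) ` incidences P L"
  proof (rule set_eqI)
    fix x
    show "x \<in> incidences P' L' \<longleftrightarrow> x \<in> (\<lambda>x. (T (fst x), T ` (snd x))) ` incidences P L"
    proof
      assume "x \<in> incidences P' L'"
      then have x: "fst x \<in> P'" "snd x \<in> L'" "fst x \<in> snd x" unfolding incidences_def by (auto simp: case_prod_beta)
      then obtain p l where pl: "p \<in> P" "l \<in> L" "fst x = T p" "snd x = T ` l" unfolding P'_def L'_def by blast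
      then have "p \<in> l" using x(3) injT by (simp add: inj_image_mem_iff)
      then have "(p, l) \<in> incidences P L" using pl unfolding incidences_def by simp
      moreover have "x = (T (fst (p,l)), T ` (snd (p,l)))" using pl by (simp add: prod_eq_iff)
      ultimately show "x \<in> (\<lambda>x. (T (fst x), T ` (snd x))) ` incidences P L" by blast
    next
      assume "x \<in> (\<lambda>x. (T (fst x), T ` (snd x))) ` incidences P L"
      then obtain y where y: "y \<in> incidences P L" "x = (T (fst y), T ` (snd y))" by blast
      then have "fst y \<in> P" "snd y \<in> L" "fst y \<in> snd y" unfolding incidences_def by (auto simp: case_prod_beta)
      then show "x \<in> incidences P' L'" using y(2) unfolding incidences_def P'_def L'_def by auto
    qed
  qed
  have "inj_on (\<lambda>x. (T (fst x), T ` (snd x))) (incidences P L)"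
  proof (rule inj_onI)
    fix x y assume "x \<in> incidences P L" "y \<in> incidences P L" "(T (fst x), T ` (snd x)) = (T (fst y), T ` (snd y))"
    then have "T (fst x) = T (fst y)" "T ` snd x = T ` snd y" by auto
    then have "fst x = fst y" "snd x = snd y" using injT by (auto simp: inj_eq inj_image_eq_iff)
    then show "x = y" by (simp add: prod_eq_iff)
  qed
  then have cI: "card (incidences P' L') = card (incidences P L)" unfolding inc by (rule card_image)
  show ?thesis using ST_inj[OF fin(1) injP' fin(2) lines] cP cL cI by simp
qed



lemma rearr: "(A::real) \<noteq> 0 \<Longrightarrow> b * (x1*x2) * (y1*y2) = (b/A^2) * (x1*y1) * (A^2*x2*y2)"
  by (simp add: field_simps)

lemma final_arith:
  fixes \<alpha> \<beta> A B M N C1 p l I :: real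
  assumes ab: "2*\<alpha>+\<beta> = 1" "\<alpha> \<le> 2/3" and AB: "A > 0" "B > 0" and MN: "M > 0" "N > 0"
    and C1_def: "C1 = max 1 ((8*A/B)^3)"
    and mn: "M \<le> N^2/C1" "N \<le> M^2/C1" and pl: "p \<ge> 0" "l \<ge> 0"
    and pP: "p \<le> A * M powr \<alpha> * N powr \<beta>" and iI: "I \<ge> B * M powr (\<alpha>+2/3) * N powr (\<beta>-1/3)"
    and ST: "I \<le> 4*p + l \<or> (I - l)^3 \<le> 64 * p^2 * l^2"
  shows "l \<ge> min (B/2) (sqrt (B^3/(512*A^2))) * (M powr (\<alpha>/2+1) * N powr (\<beta>/2-1/2))"
proof -
  define P0 where "P0 = A * M powr \<alpha> * N powr \<beta>"
  define I0 where "I0 = B * M powr (\<alpha>+2/3) * N powr (\<beta>-1/3)"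
  define T where "T = M powr (\<alpha>/2+1) * N powr (\<beta>/2-1/2)"
  define c2 where "c2 = sqrt (B^3/(512*A^2))"
  have C1: "C1 \<ge> 1" "C1 > 0" using C1_def by auto
  have P0pos: "P0 > 0" and I0pos: "I0 > 0" and Tpos: "T > 0" unfolding P0_def I0_def T_def using AB MN by auto
  define K where "K = 8*A/B"
  define R where "R = M powr (2/3) * N powr (-1/3)"
  have Rpos: "R > 0" unfolding R_def using MN by simp
  have "K^3 \<le> C1" using C1_def K_def by simp
  moreover have "N * C1 \<le> M^2" using mn(2) C1 by (simp add: field_simps)
  ultimately have "K^3 * N \<le> C1 * N" using MN(2) by (intro mult_right_mono) auto
  then have "K^3 * N \<le> M^2" using \<open>N * C1 \<le> M^2\<close> by (simp add: mult.commute)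
  moreover have R3: "R^3 = M^2 / N"
  proof -
    have "R^3 = (M powr (2/3))^3 * (N powr (-1/3))^3" unfolding R_def by (simp add: power_mult_distrib)
    also have "(M powr (2/3))^3 = M powr 2" using MN powr_power[of M "2/3" 3] by simp
    also have "(N powr (-1/3))^3 = N powr (-1)" using MN powr_power[of N "-1/3" 3] by simp
    also have "M powr 2 = M^2" using MN by (simp add: powr_numeral)
    also have "N powr (-1) = 1/N" using MN by (simp add: powr_minus_divide)
    finally show ?thesis by simp
  qed
  ultimately have "N * K^3 \<le> N * R^3" using MN(2) by (simp add: field_simps)
  then have "K^3 \<le> R^3" using MN(2) by (simp add: mult_le_cancel_left_pos)
  then have "K^(Suc 2) \<le> R^(Suc 2)" by (simp add: numeral_3_eq_3)
  then have KR: "K \<le> R" using Rpos power_le_imp_le_base[of K 2 R] by simp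
  have I0R: "I0 = B * M powr \<alpha> * N powr \<beta> * R"
  proof -
    have "M powr (\<alpha>+2/3) = M powr \<alpha> * M powr (2/3)" by (rule powr_add)
    moreover have "N powr (\<beta>-1/3) = N powr \<beta> * N powr (-1/3)" using powr_add[of N \<beta> "-1/3"] by simp
    ultimately show ?thesis unfolding I0_def R_def by (simp add: mult_ac)
  qed
  have "8 * P0 = B * M powr \<alpha> * N powr \<beta> * K"
  proof -
    have "B * K = 8 * A" unfolding K_def using AB by simp
    then show ?thesis unfolding P0_def by (metis mult.assoc mult.commute)
  qed
  also have "\<dots> \<le> B * M powr \<alpha> * N powr \<beta> * R" using KR AB MN by (intro mult_left_mono) auto
  finally have F1: "8 * P0 \<le> I0" using I0R by simp
  define \<gamma> where "\<gamma> = 2/3 - \<alpha>"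
  have g0: "\<gamma> \<ge> 0" using ab \<gamma>_def by simp
  have "N^2 * 1 \<le> N^2 * C1" using C1 by (intro mult_left_mono) auto
  then have "N^2/C1 \<le> N^2" using C1 by (simp add: divide_le_eq)
  then have "M \<le> N^2" using mn(1) by linarith
  then have "M powr (\<gamma>/2) \<le> (N^2) powr (\<gamma>/2)" using MN g0 by (intro powr_mono2) auto
  also have "(N^2) powr (\<gamma>/2) = N powr \<gamma>"
  proof -
    have "N^2 = N powr 2" using MN by (simp add: powr_numeral)
    then have "(N^2) powr (\<gamma>/2) = N powr (2 * (\<gamma>/2))" by (simp add: powr_powr)
    then show ?thesis by simp
  qed
  finally have Ng: "M powr (\<gamma>/2) \<le> N powr \<gamma>" .
  have Fge: "M powr (-\<gamma>/2) * N powr \<gamma> \<ge> 1"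
  proof -
    have "M powr (-\<gamma>/2) * M powr (\<gamma>/2) = 1" using MN by (simp add: powr_add[symmetric])
    moreover have "M powr (-\<gamma>/2) * M powr (\<gamma>/2) \<le> M powr (-\<gamma>/2) * N powr \<gamma>" using Ng MN by (intro mult_left_mono) auto
    ultimately show ?thesis by simp
  qed
  have e1: "M powr (\<alpha>+2/3) = M powr (\<alpha>/2+1) * M powr (-\<gamma>/2)"
  proof -
    have "\<alpha>+2/3 = (\<alpha>/2+1) + (-\<gamma>/2)" unfolding \<gamma>_def by (simp add: field_simps)
    then show ?thesis by (metis powr_add)
  qed
  have e2: "N powr (\<beta>-1/3) = N powr (\<beta>/2-1/2) * N powr \<gamma>"
  proof -
    have "\<beta>-1/3 = (\<beta>/2-1/2) + \<gamma>" unfolding \<gamma>_def using ab by (simp add: field_simps)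
    then show ?thesis by (metis powr_add)
  qed
  have F2: "T \<le> M powr (\<alpha>+2/3) * N powr (\<beta>-1/3)"
  proof -
    have "M powr (\<alpha>+2/3) * N powr (\<beta>-1/3) = T * (M powr (-\<gamma>/2) * N powr \<gamma>)"
      unfolding e1 e2 T_def by (simp add: mult_ac)
    moreover have "T \<le> T * (M powr (-\<gamma>/2) * N powr \<gamma>)" using Fge Tpos by simp
    ultimately show ?thesis by simp
  qed
  have F3: "I0^3 = (B^3/A^2) * T^2 * P0^2"
  proof -
    have a: "(M powr (\<alpha>+2/3))^3 = M powr (3*\<alpha>+2)" using MN powr_power[of M "\<alpha>+2/3" 3] by (simp add: algebra_simps)
    have b: "(N powr (\<beta>-1/3))^3 = N powr (3*\<beta>-1)" using MN powr_power[of N "\<beta>-1/3" 3] by (simp add: algebra_simps)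
    have c: "(M powr (\<alpha>/2+1))^2 = M powr (\<alpha>+2)" using MN powr_power[of M "\<alpha>/2+1" 2] by (simp add: algebra_simps)
    have d: "(N powr (\<beta>/2-1/2))^2 = N powr (\<beta>-1)" using MN powr_power[of N "\<beta>/2-1/2" 2] by (simp add: algebra_simps)
    have e: "(M powr \<alpha>)^2 = M powr (2*\<alpha>)" using MN powr_power[of M "\<alpha>" 2] by (simp add: algebra_simps)
    have f: "(N powr \<beta>)^2 = N powr (2*\<beta>)" using MN powr_power[of N "\<beta>" 2] by (simp add: algebra_simps)
    have g: "M powr (3*\<alpha>+2) = M powr (\<alpha>+2) * M powr (2*\<alpha>)" by (simp add: powr_add[symmetric] algebra_simps)
    have h: "N powr (3*\<beta>-1) = N powr (\<beta>-1) * N powr (2*\<beta>)" by (simp add: powr_add[symmetric] algebra_simps)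
    have "I0^3 = B^3 * (M powr (\<alpha>+2/3))^3 * (N powr (\<beta>-1/3))^3" unfolding I0_def by (simp add: power_mult_distrib)
    also have "\<dots> = B^3 * (M powr (\<alpha>+2) * M powr (2*\<alpha>)) * (N powr (\<beta>-1) * N powr (2*\<beta>))" unfolding a b g h ..
    also have "\<dots> = (B^3/A^2) * ((M powr (\<alpha>/2+1))^2 * (N powr (\<beta>/2-1/2))^2) * (A^2 * (M powr \<alpha>)^2 * (N powr \<beta>)^2)"
      unfolding c d e f using AB by (intro rearr) simp
    also have "\<dots> = (B^3/A^2) * T^2 * P0^2" unfolding T_def P0_def by (simp add: power_mult_distrib)
    finally show ?thesis .
  qed
  have cB: "min (B/2) c2 \<le> B/2" "min (B/2) c2 \<le> c2" by auto
  have I0I: "I0 \<le> I" using iI I0_def by simp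
  have pP0: "p \<le> P0" using pP P0_def by simp
  show ?thesis
  proof (cases "l \<ge> I/2")
    case True
    have "min (B/2) c2 * T \<le> (B/2) * T" using cB Tpos by (intro mult_right_mono) auto
    also have "\<dots> \<le> (B/2) * (M powr (\<alpha>+2/3) * N powr (\<beta>-1/3))" using F2 AB by (intro mult_left_mono) auto
    also have "\<dots> = I0/2" unfolding I0_def by simp
    also have "\<dots> \<le> l" using True I0I by simp
    finally show ?thesis unfolding T_def c2_def .
  next
    case False
    have "\<not> I \<le> 4*p + l" using False F1 pP0 I0I by linarith
    then have st: "(I - l)^3 \<le> 64 * p^2 * l^2" using ST by blast
    have "(I/2)^3 \<le> (I - l)^3" using False I0I I0pos by (intro power_mono) auto
    moreover have "(I/2)^3 = I^3/8" by (simp add: power_divide)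
    ultimately have "I^3 \<le> 512 * p^2 * l^2" using st by linarith
    moreover have "I0^3 \<le> I^3" using I0I I0pos by (intro power_mono) auto
    moreover have "p^2 \<le> P0^2" using pP0 pl by (intro power_mono) auto
    then have "512 * p^2 * l^2 \<le> 512 * P0^2 * l^2" by (simp add: mult_right_mono)
    ultimately have "(B^3/A^2) * T^2 * P0^2 \<le> 512 * P0^2 * l^2" using F3 by linarith
    moreover have "(B^3/A^2) * T^2 * P0^2 = 512 * (P0^2 * ((B^3/(512*A^2)) * T^2))" by simp
    ultimately have "P0^2 * ((B^3/(512*A^2)) * T^2) \<le> P0^2 * l^2" by linarith
    then have "(B^3/(512*A^2)) * T^2 \<le> l^2" using P0pos by (simp only: mult_le_cancel_left_pos zero_less_power)
    then have "sqrt ((B^3/(512*A^2)) * T^2) \<le> sqrt (l^2)" by (rule real_sqrt_le_mono)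
    moreover have "sqrt ((B^3/(512*A^2)) * T^2) = c2 * T" unfolding c2_def using Tpos by (subst real_sqrt_mult) simp
    moreover have "sqrt (l^2) = l" using pl by simp
    ultimately have "c2 * T \<le> l" by simp
    moreover have "min (B/2) c2 * T \<le> c2 * T" using cB Tpos by (intro mult_right_mono) auto
    ultimately show ?thesis unfolding T_def c2_def by linarith
  qed
qed


theorem proposition2p8:
  fixes \<alpha> \<beta> A B :: real
  assumes "2 * \<alpha> + \<beta> = 1" and "\<alpha> \<le> 2/3" and "A > 0" and "B > 0"
  shows "\<exists>C1 > 0. \<exists>c > 0. \<forall>(m::nat) (n::nat) P L.
           m > 0 \<longrightarrow> n > 0 \<longrightarrow>
           real m \<le> (real n)^2 / C1 \<longrightarrow> real n \<le> (real m)^2 / C1 \<longrightarrow>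
           finite P \<longrightarrow> finite L \<longrightarrow> (\<forall>l\<in>L. is_line l) \<longrightarrow>
           real (card P) \<le> A * real m powr \<alpha> * real n powr \<beta> \<longrightarrow>
           real (card (incidences P L)) \<ge> B * real m powr (\<alpha> + 2/3) * real n powr (\<beta> - 1/3) \<longrightarrow>
           real (card L) \<ge> c * real m powr (\<alpha>/2 + 1) * real n powr (\<beta>/2 - 1/2)"
proof -
  define C1 where "C1 = max 1 ((8*A/B)^3)"
  define c where "c = min (B/2) (sqrt (B^3/(512*A^2)))"
  have C1pos: "C1 > 0" unfolding C1_def by (simp add: less_max_iff_disj)
  have cpos: "c > 0" unfolding c_def using assms(3,4) by simp
  have "\<forall>(m::nat) (n::nat) P L.
           m > 0 \<longrightarrow> n > 0 \<longrightarrow>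
           real m \<le> (real n)^2 / C1 \<longrightarrow> real n \<le> (real m)^2 / C1 \<longrightarrow>
           finite P \<longrightarrow> finite L \<longrightarrow> (\<forall>l\<in>L. is_line l) \<longrightarrow>
           real (card P) \<le> A * real m powr \<alpha> * real n powr \<beta> \<longrightarrow>
           real (card (incidences P L)) \<ge> B * real m powr (\<alpha> + 2/3) * real n powr (\<beta> - 1/3) \<longrightarrow>
           real (card L) \<ge> c * real m powr (\<alpha>/2 + 1) * real n powr (\<beta>/2 - 1/2)"
  proof (intro allI impI)
    fix m n :: nat and P :: "(real \<times> real) set" and L :: "(real \<times> real) set set"
    assume h: "m > 0" "n > 0" "real m \<le> (real n)^2 / C1" "real n \<le> (real m)^2 / C1"
      "finite P" "finite L" "\<forall>l\<in>L. is_line l"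
      "real (card P) \<le> A * real m powr \<alpha> * real n powr \<beta>"
      "real (card (incidences P L)) \<ge> B * real m powr (\<alpha> + 2/3) * real n powr (\<beta> - 1/3)"
    have st: "real (card (incidences P L)) \<le> 4 * real (card P) + real (card L) \<or>
         (real (card (incidences P L)) - real (card L)) ^ 3 \<le> 64 * real (card P) ^ 2 * real (card L) ^ 2"
      by (rule ST[OF h(5,6,7)])
    have M: "real m > 0" "real n > 0" using h(1,2) by auto
    have "real (card L) \<ge> min (B/2) (sqrt (B^3/(512*A^2))) * (real m powr (\<alpha>/2+1) * real n powr (\<beta>/2-1/2))"
      by (rule final_arith[OF assms(1,2,3,4) M C1_def h(3,4) _ _ h(8) h(9) st]) auto
    then show "real (card L) \<ge> c * real m powr (\<alpha>/2 + 1) * real n powr (\<beta>/2 - 1/2)"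
      unfolding c_def by (simp add: mult.assoc)
  qed
  then show ?thesis using C1pos cpos by blast
qed

end
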